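(* Let $\mathcal R=\mathbb Z[a_1,a_2,a_3,a_5,a_6]$ with $a_1,a_2,a_3,a_5,a_6$ independent indeterminates, and let $k_0,k_1,l_0,l_1$ be further independent indeterminates. Define sequences $(k_n),(l_n)$ by $$k_{n+1}k_{n-1}=a_3k_n^2+a_5k_nl_n+a_6l_n^2,\qquad l_{n+1}l_{n-1}=a_1k_n^2+a_2k_nl_n+a_3l_n^2\qquad(n\ge1).$$ Then the system has the Laurent property: every $k_n,l_n$ belongs to $\mathcal R[k_0^{\pm1},k_1^{\pm1},l_0^{\pm1},l_1^{\pm1}]$. Moreover, for every $n\ge0$ the four adjacent iterates $k_n,l_n,k_{n+1},l_{n+1}$ are pairwise coprime in this Laurent polynomial ring. *)

theory Defs
  imports "HOL-Library.Poly_Mapping" "HOL-Computational_Algebra.Fraction_Field"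
begin

text \<open>Laurent polynomials over Z in variables indexed by nat: finitely supported
  maps from integer exponent vectors (nat =>0 int) to int coefficients,
  with convolution product (the group ring of Z^(omega) over Z; an integral domain).\<close>

type_synonym lpoly = "(nat \<Rightarrow>\<^sub>0 int) \<Rightarrow>\<^sub>0 int"

definition var :: "nat \<Rightarrow> lpoly" where
  "var i = Poly_Mapping.single (Poly_Mapping.single i 1) 1"

definition "a1 = var 1"
definition "a2 = var 2"
definition "a3 = var 3"
definition "a5 = var 5"
definition "a6 = var 6"
definition "k0 = var 10"
definition "k1 = var 11"
definition "l0 = var 20"
definition "l1 = var 21"

definition coeff_vars :: "nat set" where "coeff_vars = {1,2,3,5,6}"
definition laurent_vars :: "nat set" where "laurent_vars = {10,11,20,21}"

text \<open>The ring Z[a1,a2,a3,a5,a6][k0^{+-1},k1^{+-1},l0^{+-1},l1^{+-1}] as a subring: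
  only the nine variables occur, the a_i with nonnegative exponents.\<close>
definition LR :: "lpoly set" where
  "LR = {p. \<forall>m \<in> Poly_Mapping.keys p. \<forall>v. (v \<notin> coeff_vars \<union> laurent_vars \<longrightarrow> Poly_Mapping.lookup m v = 0)
                                 \<and> (v \<in> coeff_vars \<longrightarrow> Poly_Mapping.lookup m v \<ge> 0)}"

definition dvd_in :: "'a::comm_ring_1 set \<Rightarrow> 'a \<Rightarrow> 'a \<Rightarrow> bool" where
  "dvd_in S d x \<longleftrightarrow> (\<exists>q \<in> S. x = d * q)"

definition unit_in :: "'a::comm_ring_1 set \<Rightarrow> 'a \<Rightarrow> bool" where
  "unit_in S u \<longleftrightarrow> u \<in> S \<and> (\<exists>v \<in> S. u * v = 1)"

definition coprime_in :: "'a::comm_ring_1 set \<Rightarrow> 'a \<Rightarrow> 'a \<Rightarrow> bool" where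
  "coprime_in S x y \<longleftrightarrow> (\<forall>d \<in> S. dvd_in S d x \<and> dvd_in S d y \<longrightarrow> unit_in S d)"

abbreviation emb :: "lpoly \<Rightarrow> lpoly fract" where "emb p \<equiv> Fract p 1"

text \<open>The iterates in the fraction field: state n = (k_n, l_n, k_(n+1), l_(n+1)).\<close>
fun state :: "nat \<Rightarrow> lpoly fract \<times> lpoly fract \<times> lpoly fract \<times> lpoly fract" where
  "state 0 = (emb k0, emb l0, emb k1, emb l1)"
| "state (Suc n) = (case state n of (k, l, k', l') \<Rightarrow>
      (k', l',
       (emb a3 * k'^2 + emb a5 * k' * l' + emb a6 * l'^2) / k,
       (emb a1 * k'^2 + emb a2 * k' * l' + emb a3 * l'^2) / l))"

definition kseq :: "nat \<Rightarrow> lpoly fract" where "kseq n = fst (state n)"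
definition lseq :: "nat \<Rightarrow> lpoly fract" where "lseq n = fst (snd (state n))"

end

theory Submission
  imports Defs "HOL-Computational_Algebra.Polynomial_Factorial" "HOL-Library.Product_Lexorder" "HOL-Library.Product_Plus"
begin


lemma lookup_mult_single1:
  fixes f :: lpoly
  shows "Poly_Mapping.lookup (f * Poly_Mapping.single e 1) k = Poly_Mapping.lookup f (k - e)"
proof -
  have inner: "(\<Sum>q. Poly_Mapping.lookup (Poly_Mapping.single e (1::int)) q when k = l + q) = (1 when k = l + e)" for l
  proof -
    have "(\<Sum>q. Poly_Mapping.lookup (Poly_Mapping.single e (1::int)) q when k = l + q) = (\<Sum>q. (1 when k = l + e) when q = e)"
      by (rule Sum_any.cong) (auto simp: lookup_single when_def)
    also have "\<dots> = (1 when k = l + e)" by simp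
    finally show ?thesis .
  qed
  have "Poly_Mapping.lookup (f * Poly_Mapping.single e 1) k
     = (\<Sum>l. Poly_Mapping.lookup f l * (1 when k = l + e))"
    by (simp only: lookup_mult inner)
  also have "\<dots> = (\<Sum>l. Poly_Mapping.lookup f l when l = k - e)"
    by (rule Sum_any.cong) (auto simp: when_def algebra_simps)
  also have "\<dots> = Poly_Mapping.lookup f (k - e)" by simp
  finally show ?thesis .
qed

lemma var_power: "var i ^ j = Poly_Mapping.single (Poly_Mapping.single i (int j)) 1"
proof (induction j)
  case 0 then show ?case by simp
next
  case (Suc j)
  have "var i ^ Suc j = Poly_Mapping.single (Poly_Mapping.single i (int j)) 1 * Poly_Mapping.single (Poly_Mapping.single i 1) 1"
    by (simp only: power_Suc2 Suc.IH) (simp add: var_def)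
  also have "\<dots> = Poly_Mapping.single (Poly_Mapping.single i (int (Suc j))) 1"
    by (simp add: mult_single single_add[symmetric] add.commute)
  finally show ?case .
qed

lemma lookup_mult_var_power:
  "Poly_Mapping.lookup (f * var i ^ j) m = Poly_Mapping.lookup f (m - Poly_Mapping.single i (int j))"
  by (simp add: var_power lookup_mult_single1)

lemma lookup_mult_var:
  "Poly_Mapping.lookup (var i * f) m = Poly_Mapping.lookup f (m - Poly_Mapping.single i 1)"
  using lookup_mult_var_power[of f i 1 m] by (simp add: mult.commute)

definition rhom :: "('a::comm_ring_1 \<Rightarrow> lpoly) \<Rightarrow> bool" where
  "rhom f \<longleftrightarrow> f 0 = 0 \<and> f 1 = 1 \<and> (\<forall>x y. f (x + y) = f x + f y) \<and> (\<forall>x y. f (x * y) = f x * f y)"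

lemma rhomD:
  assumes "rhom f"
  shows "f 0 = 0" "f 1 = 1" "f (x + y) = f x + f y" "f (x * y) = f x * f y"
  using assms by (auto simp: rhom_def)

lemma rhom_uminus: "rhom f \<Longrightarrow> f (- x) = - f x"
proof -
  assume h: "rhom f"
  have "f (- x) + f x = 0" using rhomD(3)[OF h, of "- x" x] rhomD(1)[OF h] by simp
  then show ?thesis by (simp add: eq_neg_iff_add_eq_0)
qed

lemma rhom_diff: "rhom f \<Longrightarrow> f (x - y) = f x - f y"
  using rhomD(3)[of f x "- y"] rhom_uminus[of f y] by simp

lemma rhom_power: "rhom f \<Longrightarrow> f (x ^ n) = f x ^ n"
  by (induction n) (simp_all add: rhomD(2) rhomD(4)[of f x])

lemma rhom_prod: "rhom f \<Longrightarrow> f (prod g S) = prod (\<lambda>x. f (g x)) S"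
  by (induction S rule: infinite_finite_induct) (simp_all add: rhomD(2) rhomD(4)[of f])

definition supp_in :: "nat set \<Rightarrow> ('a \<Rightarrow> lpoly) \<Rightarrow> bool" where
  "supp_in V f \<longleftrightarrow> (\<forall>c. \<forall>m\<in>Poly_Mapping.keys (f c). \<forall>v.
       0 \<le> Poly_Mapping.lookup m v \<and> (v \<notin> V \<longrightarrow> Poly_Mapping.lookup m v = 0))"

definition lift :: "('a::zero \<Rightarrow> lpoly) \<Rightarrow> nat \<Rightarrow> 'a poly \<Rightarrow> lpoly" where
  "lift f i p = poly (map_poly f p) (var i)"

lemma lift_0 [simp]: "lift f i 0 = 0"
  by (simp add: lift_def)

lemma lift_pCons: "f 0 = 0 \<Longrightarrow> lift f i (pCons a p) = f a + var i * lift f i p"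
  by (simp add: lift_def map_poly_pCons)

lemma lift_const: "f 0 = 0 \<Longrightarrow> lift f i [:c:] = f c"
  by (simp add: lift_pCons)

lemma lift_add:
  assumes "rhom f" shows "lift f i (p + q) = lift f i p + lift f i q"
proof (induction p arbitrary: q rule: pCons_induct)
  case 0 then show ?case by simp
next
  case (pCons a p)
  obtain b q' where q: "q = pCons b q'" by (cases q) auto
  show ?case using pCons.IH[of q']
    by (simp add: q lift_pCons rhomD[OF assms] algebra_simps)
qed

lemma lift_smult:
  assumes "rhom f" shows "lift f i (smult a q) = f a * lift f i q"
  by (induction q rule: pCons_induct) (auto simp: lift_pCons rhomD[OF assms] algebra_simps)

lemma lift_mult:
  assumes "rhom f" shows "lift f i (p * q) = lift f i p * lift f i q"
proof (induction p rule: pCons_induct)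
  case 0 then show ?case by simp
next
  case (pCons a p)
  have "pCons a p * q = smult a q + pCons 0 (p * q)" by (simp add: mult_pCons_left)
  then show ?case using pCons.IH
    by (simp add: lift_add[OF assms] lift_smult[OF assms] lift_pCons rhomD[OF assms] algebra_simps)
qed

lemma rhom_lift: "rhom f \<Longrightarrow> rhom (lift f i)"
proof -
  assume h: "rhom f"
  have "lift f i 1 = 1" by (simp add: one_pCons lift_pCons rhomD[OF h])
  then show ?thesis using h unfolding rhom_def[of "lift f i"] by (simp add: lift_add lift_mult)
qed

lemma lookup_lift:
  assumes "supp_in V f" "i \<notin> V" "f 0 = 0"
  shows "Poly_Mapping.lookup (lift f i p) m =
    (if 0 \<le> Poly_Mapping.lookup m i
     then Poly_Mapping.lookup (f (coeff p (nat (Poly_Mapping.lookup m i)))) (m - Poly_Mapping.single i (Poly_Mapping.lookup m i))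
     else 0)"
proof (induction p arbitrary: m rule: pCons_induct)
  case 0 then show ?case by (simp add: assms(3))
next
  case (pCons a p)
  have fz: "Poly_Mapping.lookup (f c) m = 0" if "Poly_Mapping.lookup m i \<noteq> 0" for c m
    using assms(1,2) that unfolding supp_in_def by (metis in_keys_iff)
  have eq: "Poly_Mapping.lookup (lift f i (pCons a p)) m =
      Poly_Mapping.lookup (f a) m + Poly_Mapping.lookup (lift f i p) (m - Poly_Mapping.single i 1)"
    by (simp add: lift_pCons assms(3) lookup_add lookup_mult_var)
  have li: "Poly_Mapping.lookup (m - Poly_Mapping.single i 1) i = Poly_Mapping.lookup m i - 1"
    by (simp add: lookup_minus)
  consider "Poly_Mapping.lookup m i < 0" | "Poly_Mapping.lookup m i = 0" | "Poly_Mapping.lookup m i > 0" by linarith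
  then show ?case
  proof cases
    case 1 then show ?thesis using eq pCons.IH[of "m - Poly_Mapping.single i 1"] li fz[of m a] by simp
  next
    case 2 then show ?thesis using eq pCons.IH[of "m - Poly_Mapping.single i 1"] li by simp
  next
    case 3
    then obtain j where j: "Poly_Mapping.lookup m i = int (Suc j)" by (metis gr0_implies_Suc pos_int_cases zero_less_imp_eq_int)
    have e1: "m - Poly_Mapping.single i 1 - Poly_Mapping.single i (int j) = m - Poly_Mapping.single i (1 + int j)"
      by (simp add: diff_diff_eq single_add[symmetric])
    have e2: "nat (1 + int j) = Suc j" by simp
    then show ?thesis using eq pCons.IH[of "m - Poly_Mapping.single i 1"] li fz[of m a] j e1 e2 by simp
  qed
qed

lemma supp_in_lift:
  assumes "supp_in V f" "i \<notin> V" "f 0 = 0"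
  shows "supp_in (insert i V) (lift f i)"
  unfolding supp_in_def
proof (intro allI ballI)
  fix p m v assume m: "m \<in> Poly_Mapping.keys (lift f i p)"
  then have nz: "Poly_Mapping.lookup (lift f i p) m \<noteq> 0" by (simp add: in_keys_iff)
  then have mi: "0 \<le> Poly_Mapping.lookup m i" using lookup_lift[OF assms, of p m] by (auto split: if_splits)
  define m' where "m' = m - Poly_Mapping.single i (Poly_Mapping.lookup m i)"
  have "m' \<in> Poly_Mapping.keys (f (coeff p (nat (Poly_Mapping.lookup m i))))"
    using nz mi lookup_lift[OF assms, of p m] by (simp add: in_keys_iff m'_def)
  then have h: "\<forall>v. 0 \<le> Poly_Mapping.lookup m' v \<and> (v \<notin> V \<longrightarrow> Poly_Mapping.lookup m' v = 0)"
    using assms(1) unfolding supp_in_def by blast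
  have "Poly_Mapping.lookup m' v = (if v = i then 0 else Poly_Mapping.lookup m v)"
    by (simp add: m'_def lookup_minus lookup_single when_def)
  then show "0 \<le> Poly_Mapping.lookup m v \<and> (v \<notin> insert i V \<longrightarrow> Poly_Mapping.lookup m v = 0)"
    using h[rule_format, of v] mi by (auto split: if_splits)
qed

lemma inj_lift:
  assumes "supp_in V f" "i \<notin> V" "f 0 = 0" "inj f"
  shows "inj (lift f i)"
proof (rule injI)
  fix p q assume eq: "lift f i p = lift f i q"
  have fz: "Poly_Mapping.lookup (f c) m = 0" if "Poly_Mapping.lookup m i \<noteq> 0" for c m
    using assms(1,2) that unfolding supp_in_def by (metis in_keys_iff)
  have "f (coeff p j) = f (coeff q j)" for j
  proof (rule poly_mapping_eqI)
    fix m0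
    show "Poly_Mapping.lookup (f (coeff p j)) m0 = Poly_Mapping.lookup (f (coeff q j)) m0"
    proof (cases "Poly_Mapping.lookup m0 i = 0")
      case True
      define m where "m = m0 + Poly_Mapping.single i (int j)"
      have mi: "Poly_Mapping.lookup m i = int j" using True by (simp add: m_def lookup_add)
      have mm: "m - Poly_Mapping.single i (int j) = m0" by (simp add: m_def)
      show ?thesis
        using arg_cong[OF eq, of "\<lambda>x. Poly_Mapping.lookup x m"]
        by (simp add: lookup_lift[OF assms(1-3)] mi mm)
    next
      case False then show ?thesis using fz by simp
    qed
  qed
  then have "coeff p j = coeff q j" for j using assms(4) by (meson injD)
  then show "p = q" by (simp add: poly_eq_iff)
qed



type_synonym za = "int poly poly poly poly poly"
type_synonym p9 = "za poly poly poly poly"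

definition phiZ :: "za \<Rightarrow> lpoly" where
  "phiZ = lift (lift (lift (lift (lift of_int 1) 2) 3) 5) 6"
definition phiP :: "p9 \<Rightarrow> lpoly" where
  "phiP = lift (lift (lift (lift phiZ 10) 11) 20) 21"

lemma rhom_of_int_lp: "rhom (of_int :: int \<Rightarrow> lpoly)"
  by (simp add: rhom_def)

lemma supp_in_of_int: "supp_in {} (of_int :: int \<Rightarrow> lpoly)"
  unfolding supp_in_def
proof (intro allI ballI)
  fix c :: int and m v assume "m \<in> Poly_Mapping.keys (of_int c :: lpoly)"
  then have "m = 0" by (simp add: single_of_int[symmetric] del: single_of_int split: if_splits)
  then show "0 \<le> Poly_Mapping.lookup m v \<and> (v \<notin> {} \<longrightarrow> Poly_Mapping.lookup m v = 0)" by simp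
qed

lemma inj_of_int_lp: "inj (of_int :: int \<Rightarrow> lpoly)"
  by (rule injI) simp

lemma tower_step:
  assumes "rhom f" "supp_in V f" "inj f" "i \<notin> V"
  shows "rhom (lift f i)" "supp_in (insert i V) (lift f i)" "inj (lift f i)"
  using assms rhom_lift supp_in_lift inj_lift rhomD(1)[OF assms(1)] by blast+

lemma phiZ_props: "rhom phiZ" "supp_in {6,5,3,2,1} phiZ" "inj phiZ"
proof -
  note s1 = tower_step[OF rhom_of_int_lp supp_in_of_int inj_of_int_lp, of 1, simplified]
  note s2 = tower_step[OF s1, of 2, simplified]
  note s3 = tower_step[OF s2, of 3, simplified]
  note s5 = tower_step[OF s3, of 5, simplified]
  note s6 = tower_step[OF s5, of 6, simplified]
  show "rhom phiZ" "supp_in {6,5,3,2,1} phiZ" "inj phiZ" using s6 by (simp_all add: phiZ_def)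
qed

lemma phiP_props: "rhom phiP" "supp_in {21,20,11,10,6,5,3,2,1} phiP" "inj phiP"
proof -
  note s1 = tower_step[OF phiZ_props, of 10, simplified]
  note s2 = tower_step[OF s1, of 11, simplified]
  note s3 = tower_step[OF s2, of 20, simplified]
  note s4 = tower_step[OF s3, of 21, simplified]
  show "rhom phiP" "supp_in {21,20,11,10,6,5,3,2,1} phiP" "inj phiP" using s4 by (simp_all add: phiP_def)
qed

lemma phiZ_0 [simp]: "phiZ 0 = 0" and phiZ_1 [simp]: "phiZ 1 = 1"
  using rhomD(1,2)[OF phiZ_props(1)] by auto

lemma phiP_0 [simp]: "phiP 0 = 0" and phiP_1 [simp]: "phiP 1 = 1"
  using rhomD(1,2)[OF phiP_props(1)] by auto

lemma phiP_add: "phiP (x + y) = phiP x + phiP y" and phiP_mult: "phiP (x * y) = phiP x * phiP y"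
  and phiP_diff: "phiP (x - y) = phiP x - phiP y" and phiP_uminus: "phiP (- x) = - phiP x"
  and phiP_power: "phiP (x ^ n) = phiP x ^ n"
  using rhomD(3,4)[OF phiP_props(1)] rhom_diff[OF phiP_props(1)] rhom_uminus[OF phiP_props(1)]
    rhom_power[OF phiP_props(1)] by auto

lemma phiZ_add: "phiZ (x + y) = phiZ x + phiZ y" and phiZ_mult: "phiZ (x * y) = phiZ x * phiZ y"
  and phiZ_diff: "phiZ (x - y) = phiZ x - phiZ y" and phiZ_uminus: "phiZ (- x) = - phiZ x"
  and phiZ_power: "phiZ (x ^ n) = phiZ x ^ n"
  using rhomD(3,4)[OF phiZ_props(1)] rhom_diff[OF phiZ_props(1)] rhom_uminus[OF phiZ_props(1)]
    rhom_power[OF phiZ_props(1)] by auto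

lemmas phiP_simps = phiP_add phiP_mult phiP_diff phiP_uminus phiP_power
lemmas phiZ_simps = phiZ_add phiZ_mult phiZ_diff phiZ_uminus phiZ_power

lemma phiP_inj: "phiP x = phiP y \<longleftrightarrow> x = y"
  using phiP_props(3) by (meson injD)

lemma phiZ_inj: "phiZ x = phiZ y \<longleftrightarrow> x = y"
  using phiZ_props(3) by (meson injD)

lemma lift_one: "f 0 = 0 \<Longrightarrow> f 1 = 1 \<Longrightarrow> lift f i 1 = 1"
  by (simp add: one_pCons lift_pCons)

definition cz :: "za \<Rightarrow> p9" where "cz c = [:[:[:[:c:]:]:]:]"

lemma phiP_cz [simp]: "phiP (cz c) = phiZ c"
  by (simp add: phiP_def cz_def lift_const)

lemma cz_simps: "cz (x + y) = cz x + cz y" "cz (x * y) = cz x * cz y" "cz (x - y) = cz x - cz y"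
  "cz 0 = 0" "cz 1 = 1" "cz (- x) = - cz x"
  by (simp_all add: cz_def pCons_one)

lemma cz_power: "cz (x ^ n) = cz x ^ n"
  by (induction n) (simp_all add: cz_simps)

lemma cz_inj: "cz x = cz y \<longleftrightarrow> x = y"
  by (simp add: cz_def)

definition "A1z = ([:[:[:[:[:0,1:]:]:]:]:] :: za)"
definition "A2z = ([:[:[:[:0,1:]:]:]:] :: za)"
definition "A3z = ([:[:[:0,1:]:]:] :: za)"
definition "A5z = ([:[:0,1:]:] :: za)"
definition "A6z = ([:0,1:] :: za)"
definition "K0P = ([:[:[:[:0,1:]:]:]:] :: p9)"
definition "K1P = ([:[:[:0,1:]:]:] :: p9)"
definition "L0P = ([:[:0,1:]:] :: p9)"
definition "L1P = ([:0,1:] :: p9)"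

lemma phiZ_vars: "phiZ A1z = var 1" "phiZ A2z = var 2" "phiZ A3z = var 3" "phiZ A5z = var 5" "phiZ A6z = var 6"
  by (simp_all add: phiZ_def A1z_def A2z_def A3z_def A5z_def A6z_def lift_const lift_pCons lift_one)

lemma phiP_vars: "phiP K0P = var 10" "phiP K1P = var 11" "phiP L0P = var 20" "phiP L1P = var 21"
  by (simp_all add: phiP_def K0P_def K1P_def L0P_def L1P_def lift_const lift_pCons lift_one)

definition V9 :: "nat set" where "V9 = {1,2,3,5,6,10,11,20,21}"

definition Xv :: "nat \<Rightarrow> p9" where
  "Xv v = (if v = 1 then cz A1z else if v = 2 then cz A2z else if v = 3 then cz A3z else if v = 5 then cz A5z
           else if v = 6 then cz A6z else if v = 10 then K0P else if v = 11 then K1P else if v = 20 then L0P else L1P)"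

lemma phiP_Xv: "v \<in> V9 \<Longrightarrow> phiP (Xv v) = var v"
  by (auto simp: V9_def Xv_def phiZ_vars phiP_vars)

definition Lset :: "(nat \<Rightarrow>\<^sub>0 int) set" where
  "Lset = {m. \<forall>v. (v \<notin> coeff_vars \<union> laurent_vars \<longrightarrow> Poly_Mapping.lookup m v = 0)
                 \<and> (v \<in> coeff_vars \<longrightarrow> Poly_Mapping.lookup m v \<ge> 0)}"

lemma LR_keys: "p \<in> LR \<longleftrightarrow> Poly_Mapping.keys p \<subseteq> Lset"
  by (auto simp: LR_def Lset_def)

lemma Lset_add: "a \<in> Lset \<Longrightarrow> b \<in> Lset \<Longrightarrow> a + b \<in> Lset"
  by (auto simp: Lset_def lookup_add)

lemma LR_0 [simp]: "0 \<in> LR" and LR_1 [simp]: "1 \<in> LR"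
  by (auto simp: LR_keys Lset_def)

lemma LR_add: "x \<in> LR \<Longrightarrow> y \<in> LR \<Longrightarrow> x + y \<in> LR"
  using keys_add[of x y] by (auto simp: LR_keys)

lemma LR_diff: "x \<in> LR \<Longrightarrow> y \<in> LR \<Longrightarrow> x - y \<in> LR"
  using keys_diff[of x y] by (auto simp: LR_keys)

lemma LR_uminus: "x \<in> LR \<Longrightarrow> - x \<in> LR"
  by (auto simp: LR_keys)

lemma LR_mult: "x \<in> LR \<Longrightarrow> y \<in> LR \<Longrightarrow> x * y \<in> LR"
  using keys_mult[of x y] by (auto simp: LR_keys intro!: Lset_add)

lemma LR_power: "x \<in> LR \<Longrightarrow> x ^ n \<in> LR"
  by (induction n) (auto intro: LR_mult)

lemma phiP_LR: "phiP X \<in> LR"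
  using phiP_props(2) by (auto simp: LR_keys Lset_def supp_in_def coeff_vars_def laurent_vars_def)

definition KP :: p9 where "KP = K0P * K1P * L0P * L1P"
definition KK :: lpoly where "KK = phiP KP"
definition Ev :: "nat \<Rightarrow>\<^sub>0 int" where
  "Ev = Poly_Mapping.single 10 1 + Poly_Mapping.single 11 1 + Poly_Mapping.single 20 1 + Poly_Mapping.single 21 1"
definition Kinv :: lpoly where "Kinv = Poly_Mapping.single (- Ev) 1"

lemma KK_single: "KK = Poly_Mapping.single Ev 1"
  by (simp add: KK_def KP_def phiP_simps phiP_vars var_def mult_single Ev_def)

lemma KK_Kinv: "KK * Kinv = 1"
  by (simp add: KK_single Kinv_def mult_single)

lemma Kinv_LR: "Kinv \<in> LR"
  by (auto simp: LR_keys Kinv_def Lset_def Ev_def lookup_add lookup_minus lookup_single when_def coeff_vars_def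
      laurent_vars_def)

lemma KK_LR: "KK \<in> LR"
  by (simp add: KK_def phiP_LR)

lemma single_sum_mult:
  "finite S \<Longrightarrow> Poly_Mapping.single (\<Sum>v\<in>S. g v) (1::int) = (\<Prod>v\<in>S. Poly_Mapping.single (g v) 1 :: lpoly)"
proof (induction S rule: finite_induct)
  case empty then show ?case by simp
next
  case (insert x F)
  have "Poly_Mapping.single (g x + sum g F) (1::int) = (Poly_Mapping.single (g x) 1 :: lpoly) * Poly_Mapping.single (sum g F) 1"
    by (simp add: mult_single)
  then show ?case using insert by simp
qed

lemma mono_phiP:
  assumes "\<forall>v. 0 \<le> Poly_Mapping.lookup m v \<and> (v \<notin> V9 \<longrightarrow> Poly_Mapping.lookup m v = 0)"
  shows "(Poly_Mapping.single m 1 :: lpoly) = phiP (\<Prod>v\<in>V9. Xv v ^ nat (Poly_Mapping.lookup m v))"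
proof -
  have fin: "finite V9" by (simp add: V9_def)
  have m: "m = (\<Sum>v\<in>V9. Poly_Mapping.single v (Poly_Mapping.lookup m v))"
  proof (rule poly_mapping_eqI)
    fix w
    have "Poly_Mapping.lookup (\<Sum>v\<in>V9. Poly_Mapping.single v (Poly_Mapping.lookup m v)) w
        = (\<Sum>v\<in>V9. if v = w then Poly_Mapping.lookup m v else 0)"
      by (simp add: lookup_sum lookup_single when_def eq_commute)
    also have "\<dots> = Poly_Mapping.lookup m w" using assms fin by (auto simp: sum.delta')
    finally show "Poly_Mapping.lookup m w = Poly_Mapping.lookup (\<Sum>v\<in>V9. Poly_Mapping.single v (Poly_Mapping.lookup m v)) w" by simp
  qed
  have "(Poly_Mapping.single m 1 :: lpoly) = (\<Prod>v\<in>V9. Poly_Mapping.single (Poly_Mapping.single v (Poly_Mapping.lookup m v)) 1)"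
    by (subst m) (rule single_sum_mult[OF fin])
  also have "\<dots> = (\<Prod>v\<in>V9. var v ^ nat (Poly_Mapping.lookup m v))"
    using assms by (intro prod.cong refl) (simp add: var_power)
  also have "\<dots> = (\<Prod>v\<in>V9. phiP (Xv v) ^ nat (Poly_Mapping.lookup m v))"
    by (intro prod.cong refl) (simp add: phiP_Xv)
  also have "\<dots> = phiP (\<Prod>v\<in>V9. Xv v ^ nat (Poly_Mapping.lookup m v))"
    by (simp add: rhom_prod[OF phiP_props(1)] phiP_power)
  finally show ?thesis .
qed

definition EvN :: "nat \<Rightarrow> (nat \<Rightarrow>\<^sub>0 int)" where
  "EvN N = Poly_Mapping.single 10 (int N) + Poly_Mapping.single 11 (int N) + Poly_Mapping.single 20 (int N) + Poly_Mapping.single 21 (int N)"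

lemma KK_power: "KK ^ N = Poly_Mapping.single (EvN N) 1"
proof (induction N)
  case 0 then show ?case by (simp add: EvN_def)
next
  case (Suc N)
  have "Ev + EvN N = EvN (Suc N)" by (simp add: EvN_def Ev_def single_add algebra_simps)
  then show ?case using Suc by (simp add: KK_single mult_single)
qed

lemma rep_LR:
  assumes "x \<in> LR" shows "\<exists>N X. x * KK ^ N = phiP X"
proof -
  have "Poly_Mapping.keys x \<subseteq> Lset" using assms by (simp add: LR_keys)
  then show ?thesis
  proof (induction x rule: frag_induction)
    case zero then show ?case by (intro exI[of _ 0]) auto
  next
    case (one m)
    define N where "N = nat (- Poly_Mapping.lookup m 10) + nat (- Poly_Mapping.lookup m 11)
       + nat (- Poly_Mapping.lookup m 20) + nat (- Poly_Mapping.lookup m 21)"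
    define m' where "m' = m + EvN N"
    have lm': "Poly_Mapping.lookup m' v = Poly_Mapping.lookup m v + (if v \<in> laurent_vars then int N else 0)" for v
      by (auto simp: m'_def EvN_def lookup_add lookup_single when_def laurent_vars_def)
    have "\<forall>v. 0 \<le> Poly_Mapping.lookup m' v \<and> (v \<notin> V9 \<longrightarrow> Poly_Mapping.lookup m' v = 0)"
      using one lm' by (auto simp: Lset_def V9_def coeff_vars_def laurent_vars_def N_def)
    then have "(Poly_Mapping.single m' 1 :: lpoly) = phiP (\<Prod>v\<in>V9. Xv v ^ nat (Poly_Mapping.lookup m' v))"
      by (rule mono_phiP)
    moreover have "frag_of m * KK ^ N = Poly_Mapping.single m' 1"
      by (simp add: KK_power mult_single m'_def)
    ultimately have "frag_of m * KK ^ N = phiP (\<Prod>v\<in>V9. Xv v ^ nat (Poly_Mapping.lookup m' v))" by simp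
    then show ?case by blast
  next
    case (diff a b)
    then obtain N X M Y where a: "a * KK ^ N = phiP X" and b: "b * KK ^ M = phiP Y" by blast
    have "(a - b) * KK ^ (N + M) = phiP (X * KP ^ M - Y * KP ^ N)"
      by (simp add: phiP_simps KK_def[symmetric] algebra_simps power_add a[symmetric] b[symmetric])
    then show ?case by blast
  qed
qed



lemma KK_Kinv_pow: "KK ^ N * Kinv ^ N = 1"
  by (simp add: power_mult_distrib[symmetric] KK_Kinv)

lemma Kinv_pow_LR: "Kinv ^ N \<in> LR"
  by (simp add: LR_power Kinv_LR)

lemma rep_eq: "x * KK ^ N = phiP X \<Longrightarrow> x = phiP X * Kinv ^ N"
proof -
  assume h: "x * KK ^ N = phiP X"
  have "x = x * (KK ^ N * Kinv ^ N)" by (simp add: KK_Kinv_pow)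
  also have "\<dots> = phiP X * Kinv ^ N" by (simp add: h mult.assoc[symmetric])
  finally show ?thesis .
qed

lemma dvd_inI: "q \<in> LR \<Longrightarrow> x = d * q \<Longrightarrow> dvd_in LR d x"
  by (auto simp: dvd_in_def)

lemma dvd_in_refl: "dvd_in LR x x"
  by (rule dvd_inI[of 1]) auto

lemma dvd_in_trans: "dvd_in LR a b \<Longrightarrow> dvd_in LR b c \<Longrightarrow> dvd_in LR a c"
proof -
  assume "dvd_in LR a b" "dvd_in LR b c"
  then obtain p q where "p \<in> LR" "b = a * p" "q \<in> LR" "c = b * q" by (auto simp: dvd_in_def)
  then show ?thesis by (intro dvd_inI[of "p * q"]) (simp_all add: LR_mult mult.assoc)
qed

lemma dvd_in_mult_right: "c \<in> LR \<Longrightarrow> dvd_in LR a b \<Longrightarrow> dvd_in LR a (b * c)"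
proof -
  assume "c \<in> LR" "dvd_in LR a b"
  then obtain p where "p \<in> LR" "b = a * p" by (auto simp: dvd_in_def)
  then show ?thesis using \<open>c \<in> LR\<close> by (intro dvd_inI[of "p * c"]) (simp_all add: LR_mult mult.assoc)
qed

lemma dvd_in_mult_left: "c \<in> LR \<Longrightarrow> dvd_in LR a b \<Longrightarrow> dvd_in LR a (c * b)"
  using dvd_in_mult_right[of c a b] by (simp add: mult.commute)

lemma dvd_in_add: "dvd_in LR a b \<Longrightarrow> dvd_in LR a c \<Longrightarrow> dvd_in LR a (b + c)"
proof -
  assume "dvd_in LR a b" "dvd_in LR a c"
  then obtain p q where "p \<in> LR" "b = a * p" "q \<in> LR" "c = a * q" by (auto simp: dvd_in_def)
  then show ?thesis by (intro dvd_inI[of "p + q"]) (simp_all add: LR_add distrib_left)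
qed

lemma dvd_in_diff: "dvd_in LR a b \<Longrightarrow> dvd_in LR a c \<Longrightarrow> dvd_in LR a (b - c)"
proof -
  assume "dvd_in LR a b" "dvd_in LR a c"
  then obtain p q where "p \<in> LR" "b = a * p" "q \<in> LR" "c = a * q" by (auto simp: dvd_in_def)
  then show ?thesis by (intro dvd_inI[of "p - q"]) (simp_all add: LR_diff right_diff_distrib)
qed

lemma dvd_in_0: "dvd_in LR a 0"
  by (rule dvd_inI[of 0]) auto

lemma dvd_in_self_mult: "b \<in> LR \<Longrightarrow> dvd_in LR a (a * b)"
  by (rule dvd_inI) auto

lemma unit_in_mult: "unit_in LR a \<Longrightarrow> unit_in LR b \<Longrightarrow> unit_in LR (a * b)"
proof -
  assume "unit_in LR a" "unit_in LR b"
  then obtain va vb where "a \<in> LR" "b \<in> LR" "va \<in> LR" "vb \<in> LR" "a * va = 1" "b * vb = 1"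
    by (auto simp: unit_in_def)
  moreover have "(a * b) * (va * vb) = (a * va) * (b * vb)" by (simp add: ac_simps)
  ultimately show ?thesis unfolding unit_in_def by (auto intro!: LR_mult bexI[of _ "va * vb"])
qed

lemma unit_in_dvd: "unit_in LR u \<Longrightarrow> x \<in> LR \<Longrightarrow> dvd_in LR u x"
proof -
  assume "unit_in LR u" "x \<in> LR"
  then obtain v where "v \<in> LR" "u * v = 1" by (auto simp: unit_in_def)
  then have "x = u * (v * x)" by (simp add: mult.assoc[symmetric])
  then show ?thesis using \<open>v \<in> LR\<close> \<open>x \<in> LR\<close> by (intro dvd_inI[OF LR_mult])
qed

lemma dvd_in_unit: "d \<in> LR \<Longrightarrow> dvd_in LR d u \<Longrightarrow> unit_in LR u \<Longrightarrow> unit_in LR d"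
proof -
  assume "d \<in> LR" "dvd_in LR d u" "unit_in LR u"
  then obtain q v where "q \<in> LR" "u = d * q" "v \<in> LR" "u * v = 1" by (auto simp: unit_in_def dvd_in_def)
  then have "d * (q * v) = 1" by (simp add: mult.assoc)
  then show ?thesis using \<open>d \<in> LR\<close> \<open>q \<in> LR\<close> \<open>v \<in> LR\<close> by (auto simp: unit_in_def intro!: LR_mult)
qed

lemma unit_KK: "unit_in LR KK"
  unfolding unit_in_def using KK_Kinv KK_LR Kinv_LR by blast

lemma unit_Kinv: "unit_in LR Kinv"
  unfolding unit_in_def using KK_Kinv KK_LR Kinv_LR by (simp add: mult.commute) blast

lemma unit_1: "unit_in LR 1"
  unfolding unit_in_def by auto

lemma unit_KK_pow: "unit_in LR (KK ^ N)"
  by (induction N) (simp_all add: unit_in_mult unit_KK unit_1)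

lemma unit_Kinv_pow: "unit_in LR (Kinv ^ N)"
  by (induction N) (simp_all add: unit_in_mult unit_Kinv unit_1)

lemma dvd_in_unit_mult_iff: "unit_in LR u \<Longrightarrow> dvd_in LR (d * u) x \<longleftrightarrow> dvd_in LR d x"
proof -
  assume "unit_in LR u"
  then obtain v where v: "u \<in> LR" "v \<in> LR" "u * v = 1" by (auto simp: unit_in_def)
  show ?thesis
  proof
    assume "dvd_in LR (d * u) x"
    then obtain q where "q \<in> LR" "x = d * u * q" by (auto simp: dvd_in_def)
    then show "dvd_in LR d x" using v by (intro dvd_inI[of "u * q"]) (auto intro: LR_mult simp: ac_simps)
  next
    assume "dvd_in LR d x"
    then obtain q where "q \<in> LR" "x = d * q" by (auto simp: dvd_in_def)
    moreover have "d * q = d * u * (v * q)" using v by (simp add: ac_simps)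
    ultimately show "dvd_in LR (d * u) x" using v by (intro dvd_inI[of "v * q"]) (auto intro: LR_mult)
  qed
qed

lemma dvd_in_unit_mult_iff2: "unit_in LR u \<Longrightarrow> x \<in> LR \<Longrightarrow> dvd_in LR d (x * u) \<longleftrightarrow> dvd_in LR d x"
proof -
  assume "unit_in LR u" "x \<in> LR"
  then obtain v where v: "u \<in> LR" "v \<in> LR" "u * v = 1" by (auto simp: unit_in_def)
  show ?thesis
  proof
    assume "dvd_in LR d (x * u)"
    then have "dvd_in LR d (x * u * v)" by (rule dvd_in_mult_right[OF v(2)])
    moreover have "x * u * v = x" using v by (simp add: mult.assoc)
    ultimately show "dvd_in LR d x" by simp
  next
    assume "dvd_in LR d x"
    then show "dvd_in LR d (x * u)" by (rule dvd_in_mult_right[OF v(1)])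
  qed
qed

lemma dvd_transfer: "dvd_in LR (phiP X) (phiP Y) \<longleftrightarrow> (\<exists>M. X dvd Y * KP ^ M)"
proof
  assume "dvd_in LR (phiP X) (phiP Y)"
  then obtain q where q: "q \<in> LR" "phiP Y = phiP X * q" by (auto simp: dvd_in_def)
  obtain N Q where Q: "q * KK ^ N = phiP Q" using rep_LR[OF q(1)] by blast
  have "phiP (Y * KP ^ N) = phiP (X * Q)"
    by (simp add: phiP_simps KK_def[symmetric] q(2) Q[symmetric] mult.assoc)
  then have "Y * KP ^ N = X * Q" by (simp add: phiP_inj)
  then have "X dvd Y * KP ^ N" by simp
  then show "\<exists>M. X dvd Y * KP ^ M" by blast
next
  assume "\<exists>M. X dvd Y * KP ^ M"
  then obtain M Q where Q: "Y * KP ^ M = X * Q" by (auto elim: dvdE)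
  have e: "phiP Y * KK ^ M = phiP X * phiP Q"
    using arg_cong[OF Q, of phiP] by (simp add: phiP_simps KK_def[symmetric])
  have "phiP Y = phiP Y * (KK ^ M * Kinv ^ M)" by (simp add: KK_Kinv_pow)
  also have "\<dots> = phiP X * (phiP Q * Kinv ^ M)" by (simp add: mult.assoc[symmetric] e)
  finally have "phiP Y = phiP X * (phiP Q * Kinv ^ M)" .
  then show "dvd_in LR (phiP X) (phiP Y)"
    by (intro dvd_inI[OF LR_mult[OF phiP_LR Kinv_pow_LR]])
qed

lemma unit_transfer: "unit_in LR (phiP U) \<longleftrightarrow> (\<exists>M. U dvd KP ^ M)"
proof -
  have "unit_in LR (phiP U) \<longleftrightarrow> dvd_in LR (phiP U) (phiP 1)"
    by (auto simp: unit_in_def dvd_in_def phiP_LR)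
  then show ?thesis using dvd_transfer[of U 1] by simp
qed

lemma dvd_in_rep:
  assumes "d * KK ^ N = phiP D" "x * KK ^ M = phiP X" "d \<in> LR" "x \<in> LR"
  shows "dvd_in LR d x \<longleftrightarrow> dvd_in LR (phiP D) (phiP X)"
proof -
  have "dvd_in LR d x \<longleftrightarrow> dvd_in LR (d * KK ^ N) x"
    using dvd_in_unit_mult_iff[OF unit_KK_pow] by simp
  also have "\<dots> \<longleftrightarrow> dvd_in LR (d * KK ^ N) (x * KK ^ M)"
    using dvd_in_unit_mult_iff2[OF unit_KK_pow assms(4), of "d * KK ^ N" M] by simp
  finally show ?thesis using assms by simp
qed

lemma unit_in_rep:
  assumes "d * KK ^ N = phiP D" "d \<in> LR"
  shows "unit_in LR d \<longleftrightarrow> unit_in LR (phiP D)"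
proof
  assume "unit_in LR d"
  then show "unit_in LR (phiP D)" using unit_in_mult[OF _ unit_KK_pow, of d N] assms(1) by simp
next
  assume "unit_in LR (phiP D)"
  then have "unit_in LR (phiP D * Kinv ^ N)" using unit_in_mult[OF _ unit_Kinv_pow] by blast
  then show "unit_in LR d" using rep_eq[OF assms(1)] by simp
qed

lemma not_unit_0: "\<not> unit_in LR 0"
  by (simp add: unit_in_def)

lemma euclid_LR:
  assumes xyz: "x \<in> LR" "y \<in> LR" "z \<in> LR" and cop: "coprime_in LR x y" and dv: "dvd_in LR x (y * z)"
  shows "dvd_in LR x z"
proof -
  obtain a X where xa: "x * KK ^ a = phiP X" using rep_LR[OF xyz(1)] by blast
  obtain b Y where yb: "y * KK ^ b = phiP Y" using rep_LR[OF xyz(2)] by blast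
  obtain c Z where zc: "z * KK ^ c = phiP Z" using rep_LR[OF xyz(3)] by blast
  show ?thesis
  proof (cases "X = 0 \<and> Y = 0")
    case True
    then have "x = 0" "y = 0" using rep_eq[OF xa] rep_eq[OF yb] by simp_all
    then have False using cop not_unit_0 dvd_in_0 by (auto simp: coprime_in_def)
    then show ?thesis ..
  next
    case False
    define g where "g = gcd X Y"
    have gnz: "g \<noteq> 0" using False by (simp add: g_def)
    define X1 where "X1 = X div g"
    define Y1 where "Y1 = Y div g"
    have X: "X = g * X1" by (simp add: X1_def g_def)
    have Y: "Y = g * Y1" by (simp add: Y1_def g_def)
    have cop1: "coprime X1 Y1" using div_gcd_coprime[of X Y] False by (simp add: X1_def Y1_def g_def)
    have "dvd_in LR (phiP g) x"
    proof (rule dvd_inI[of "phiP X1 * Kinv ^ a"])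
      show "phiP X1 * Kinv ^ a \<in> LR" by (simp add: LR_mult phiP_LR Kinv_pow_LR)
      show "x = phiP g * (phiP X1 * Kinv ^ a)" using rep_eq[OF xa] X by (simp add: phiP_simps mult.assoc)
    qed
    moreover have "dvd_in LR (phiP g) y"
    proof (rule dvd_inI[of "phiP Y1 * Kinv ^ b"])
      show "phiP Y1 * Kinv ^ b \<in> LR" by (simp add: LR_mult phiP_LR Kinv_pow_LR)
      show "y = phiP g * (phiP Y1 * Kinv ^ b)" using rep_eq[OF yb] Y by (simp add: phiP_simps mult.assoc)
    qed
    ultimately have "unit_in LR (phiP g)" using cop phiP_LR by (auto simp: coprime_in_def)
    then obtain M where gM: "g dvd KP ^ M" using unit_transfer by blast
    have yz: "(y * z) * KK ^ (b + c) = phiP (Y * Z)"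
      by (simp add: phiP_simps power_add yb[symmetric] zc[symmetric] ac_simps)
    have "dvd_in LR (phiP X) (phiP (Y * Z))"
      using dv dvd_in_rep[OF xa yz xyz(1) LR_mult[OF xyz(2,3)]] by simp
    then obtain M' where "X dvd Y * Z * KP ^ M'" using dvd_transfer by blast
    then have "g * X1 dvd g * (Y1 * (Z * KP ^ M'))" by (simp add: X Y ac_simps)
    then have "X1 dvd Y1 * (Z * KP ^ M')" using gnz by simp
    then have "X1 dvd Z * KP ^ M'" using cop1 by (simp add: coprime_dvd_mult_right_iff)
    then have "g * X1 dvd KP ^ M * (Z * KP ^ M')" by (rule mult_dvd_mono[OF gM])
    then have "X dvd Z * KP ^ (M + M')" by (simp add: X power_add ac_simps)
    then have "dvd_in LR (phiP X) (phiP Z)" using dvd_transfer by blast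
    then show ?thesis using dvd_in_rep[OF xa zc xyz(1) xyz(3)] by simp
  qed
qed

lemma coprime_in_sym: "coprime_in LR x y \<Longrightarrow> coprime_in LR y x"
  by (auto simp: coprime_in_def)

lemma coprime_in_unit: "unit_in LR u \<Longrightarrow> coprime_in LR u x"
  by (auto simp: coprime_in_def intro: dvd_in_unit)

lemma coprime_in_dvd: "d \<in> LR \<Longrightarrow> dvd_in LR d x \<Longrightarrow> coprime_in LR x y \<Longrightarrow> coprime_in LR d y"
  unfolding coprime_in_def by (blast intro: dvd_in_trans)

lemma coprime_in_mult:
  assumes "x \<in> LR" "y \<in> LR" "z \<in> LR" "coprime_in LR x y" "coprime_in LR x z"
  shows "coprime_in LR x (y * z)"
  unfolding coprime_in_def
proof (intro ballI impI)
  fix d assume d: "d \<in> LR" "dvd_in LR d x \<and> dvd_in LR d (y * z)"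
  have "coprime_in LR d y" using coprime_in_dvd[OF d(1) _ assms(4)] d(2) by blast
  then have "dvd_in LR d z" using euclid_LR[OF d(1) assms(2,3)] d(2) by blast
  then show "unit_in LR d" using assms(5) d by (auto simp: coprime_in_def)
qed

lemma coprime_in_power:
  assumes "x \<in> LR" "y \<in> LR" "coprime_in LR x y"
  shows "coprime_in LR x (y ^ n)"
proof (induction n)
  case 0 then show ?case by (simp add: coprime_in_sym coprime_in_unit unit_1)
next
  case (Suc n) then show ?case using coprime_in_mult[OF assms(1,2) LR_power[OF assms(2)] assms(3)] by simp
qed

lemma euclid_LR':
  assumes "x \<in> LR" "y \<in> LR" "z \<in> LR" "coprime_in LR x y" "dvd_in LR x (z * y)"
  shows "dvd_in LR x z"
  using euclid_LR[OF assms(1-4)] assms(5) by (simp add: mult.commute)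



definition ghom :: "('a::comm_ring_1 \<Rightarrow> 'b::comm_ring_1) \<Rightarrow> bool" where
  "ghom f \<longleftrightarrow> f 0 = 0 \<and> f 1 = 1 \<and> (\<forall>x y. f (x + y) = f x + f y) \<and> (\<forall>x y. f (x * y) = f x * f y)"

lemma ghomD:
  assumes "ghom f"
  shows "f 0 = 0" "f 1 = 1" "f (x + y) = f x + f y" "f (x * y) = f x * f y"
  using assms by (auto simp: ghom_def)

lemma ghom_uminus: "ghom f \<Longrightarrow> f (- x) = - f x"
proof -
  assume h: "ghom f"
  have "f (- x) + f x = 0" using ghomD(3)[OF h, of "- x" x] ghomD(1)[OF h] by simp
  then show ?thesis by (simp add: eq_neg_iff_add_eq_0)
qed

lemma ghom_diff: "ghom f \<Longrightarrow> f (x - y) = f x - f y"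
  using ghomD(3)[of f x "- y"] ghom_uminus[of f y] by simp

lemma ghom_power: "ghom f \<Longrightarrow> f (x ^ n) = f x ^ n"
  by (induction n) (simp_all add: ghomD(2) ghomD(4)[of f x])

definition ev1 :: "('a::zero \<Rightarrow> 'b::comm_ring_1) \<Rightarrow> 'b \<Rightarrow> 'a poly \<Rightarrow> 'b" where
  "ev1 f v p = poly (map_poly f p) v"

lemma ev1_pCons: "f 0 = 0 \<Longrightarrow> ev1 f v (pCons a p) = f a + v * ev1 f v p"
  by (simp add: ev1_def map_poly_pCons)

lemma ev1_0 [simp]: "ev1 f v 0 = 0"
  by (simp add: ev1_def)

lemma ev1_add:
  assumes "ghom f" shows "ev1 f v (p + q) = ev1 f v p + ev1 f v q"
proof (induction p arbitrary: q rule: pCons_induct)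
  case 0 then show ?case by simp
next
  case (pCons a p)
  obtain b q' where q: "q = pCons b q'" by (cases q) auto
  show ?case using pCons.IH[of q']
    by (simp add: q ev1_pCons ghomD[OF assms] algebra_simps)
qed

lemma ev1_smult:
  assumes "ghom f" shows "ev1 f v (smult a q) = f a * ev1 f v q"
  by (induction q rule: pCons_induct) (auto simp: ev1_pCons ghomD[OF assms] algebra_simps)

lemma ev1_mult:
  assumes "ghom f" shows "ev1 f v (p * q) = ev1 f v p * ev1 f v q"
proof (induction p rule: pCons_induct)
  case 0 then show ?case by simp
next
  case (pCons a p)
  have "pCons a p * q = smult a q + pCons 0 (p * q)" by (simp add: mult_pCons_left)
  then show ?case using pCons.IH
    by (simp add: ev1_add[OF assms] ev1_smult[OF assms] ev1_pCons ghomD[OF assms] algebra_simps)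
qed

lemma ghom_ev1: "ghom f \<Longrightarrow> ghom (ev1 f v)"
proof -
  assume h: "ghom f"
  have "ev1 f v 1 = 1" by (simp add: one_pCons ev1_pCons ghomD[OF h])
  then show ?thesis using h unfolding ghom_def[of "ev1 f v"] by (simp add: ev1_add ev1_mult)
qed

lemma ev1_one: "f 0 = 0 \<Longrightarrow> f 1 = 1 \<Longrightarrow> ev1 f v 1 = 1"
  by (simp add: one_pCons ev1_pCons)

lemma ev1_const: "f 0 = 0 \<Longrightarrow> ev1 f v [:c:] = f c"
  by (simp add: ev1_pCons)

type_synonym pt = "int \<times> int \<times> int \<times> int \<times> int"

definition evZ :: "pt \<Rightarrow> za \<Rightarrow> int" where
  "evZ pt = (case pt of (b1, b2, b3, b5, b6) \<Rightarrow> ev1 (ev1 (ev1 (ev1 (ev1 (\<lambda>x. x) b1) b2) b3) b5) b6)"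

definition evP :: "pt \<Rightarrow> p9 \<Rightarrow> int" where
  "evP pt = ev1 (ev1 (ev1 (ev1 (evZ pt) 1) 1) 1) 1"

lemma ghom_id: "ghom (\<lambda>x::int. x)" by (simp add: ghom_def)

lemma ghom_evZ: "ghom (evZ pt)"
  by (cases pt) (simp add: evZ_def ghom_ev1 ghom_id)

lemma ghom_evP: "ghom (evP pt)"
  by (simp add: evP_def ghom_ev1 ghom_evZ)

lemma evZ_simps: "evZ pt (x + y) = evZ pt x + evZ pt y" "evZ pt (x * y) = evZ pt x * evZ pt y"
  "evZ pt (x - y) = evZ pt x - evZ pt y" "evZ pt (- x) = - evZ pt x" "evZ pt (x ^ n) = evZ pt x ^ n"
  "evZ pt 0 = 0" "evZ pt 1 = 1"
  using ghomD[OF ghom_evZ] ghom_diff[OF ghom_evZ] ghom_uminus[OF ghom_evZ] ghom_power[OF ghom_evZ] by auto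

lemma evP_simps: "evP pt (x + y) = evP pt x + evP pt y" "evP pt (x * y) = evP pt x * evP pt y"
  "evP pt (x - y) = evP pt x - evP pt y" "evP pt (- x) = - evP pt x" "evP pt (x ^ n) = evP pt x ^ n"
  "evP pt 0 = 0" "evP pt 1 = 1"
  using ghomD[OF ghom_evP] ghom_diff[OF ghom_evP] ghom_uminus[OF ghom_evP] ghom_power[OF ghom_evP] by auto

lemma evP_cz [simp]: "evP pt (cz c) = evZ pt c"
  using ghomD(1)[OF ghom_evZ, of pt] by (simp add: evP_def cz_def ev1_const ev1_one)

lemma evZ_vars: "evZ (b1, b2, b3, b5, b6) A1z = b1" "evZ (b1, b2, b3, b5, b6) A2z = b2"
  "evZ (b1, b2, b3, b5, b6) A3z = b3" "evZ (b1, b2, b3, b5, b6) A5z = b5" "evZ (b1, b2, b3, b5, b6) A6z = b6"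
  by (simp_all add: evZ_def A1z_def A2z_def A3z_def A5z_def A6z_def ev1_const ev1_pCons ev1_one)

lemma evP_KP [simp]: "evP pt KP = 1"
  using ghomD(1,2)[OF ghom_evZ, of pt]
  by (simp add: evP_def KP_def K0P_def K1P_def L0P_def L1P_def ev1_const ev1_pCons ev1_one ev1_mult ghom_ev1 ghom_evZ)

definition evL :: "pt \<Rightarrow> lpoly \<Rightarrow> int" where
  "evL pt x = evP pt (snd (SOME p. x * KK ^ (fst p) = phiP (snd p)))"

lemma evL_rep:
  assumes "x \<in> LR" "x * KK ^ N = phiP X"
  shows "evL pt x = evP pt X"
proof -
  obtain N' X' where ex: "x * KK ^ N' = phiP X'" using rep_LR[OF assms(1)] by blast
  define p where "p = (SOME p. x * KK ^ (fst p) = phiP (snd p))"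
  have p: "x * KK ^ (fst p) = phiP (snd p)" unfolding p_def
    by (rule someI[of _ "(N', X')"]) (simp add: ex)
  have "phiP (X * KP ^ (fst p)) = phiP (snd p * KP ^ N)"
    by (simp add: phiP_simps KK_def[symmetric] assms(2)[symmetric] p[symmetric] ac_simps)
  then have "X * KP ^ (fst p) = snd p * KP ^ N" by (simp add: phiP_inj)
  then have "evP pt (X * KP ^ (fst p)) = evP pt (snd p * KP ^ N)" by simp
  then have "evP pt X = evP pt (snd p)" by (simp add: evP_simps)
  then show ?thesis by (simp add: evL_def p_def)
qed

lemma evL_mult: "x \<in> LR \<Longrightarrow> y \<in> LR \<Longrightarrow> evL pt (x * y) = evL pt x * evL pt y"
proof -
  assume xy: "x \<in> LR" "y \<in> LR"
  obtain N X where x: "x * KK ^ N = phiP X" using rep_LR[OF xy(1)] by blast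
  obtain M Y where y: "y * KK ^ M = phiP Y" using rep_LR[OF xy(2)] by blast
  have "(x * y) * KK ^ (N + M) = phiP (X * Y)"
    by (simp add: phiP_simps power_add x[symmetric] y[symmetric] ac_simps)
  then show ?thesis using evL_rep[OF LR_mult[OF xy]] evL_rep[OF xy(1) x] evL_rep[OF xy(2) y]
    by (simp add: evP_simps)
qed

lemma evL_add: "x \<in> LR \<Longrightarrow> y \<in> LR \<Longrightarrow> evL pt (x + y) = evL pt x + evL pt y"
proof -
  assume xy: "x \<in> LR" "y \<in> LR"
  obtain N X where x: "x * KK ^ N = phiP X" using rep_LR[OF xy(1)] by blast
  obtain M Y where y: "y * KK ^ M = phiP Y" using rep_LR[OF xy(2)] by blast
  have "(x + y) * KK ^ (N + M) = phiP (X * KP ^ M + Y * KP ^ N)"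
    by (simp add: phiP_simps KK_def[symmetric] power_add x[symmetric] y[symmetric] algebra_simps)
  then show ?thesis using evL_rep[OF LR_add[OF xy]] evL_rep[OF xy(1) x] evL_rep[OF xy(2) y]
    by (simp add: evP_simps)
qed

lemma evL_phiZ: "evL pt (phiZ c) = evZ pt c"
proof -
  have e: "phiZ c * KK ^ 0 = phiP (cz c)" by simp
  have "phiZ c \<in> LR" using phiP_LR[of "cz c"] by simp
  then show ?thesis using evL_rep[OF _ e] by simp
qed

lemma evL_dvd: "x \<in> LR \<Longrightarrow> dvd_in LR (phiZ c) x \<Longrightarrow> evZ pt c = 0 \<Longrightarrow> evL pt x = 0"
proof -
  assume "x \<in> LR" "dvd_in LR (phiZ c) x" "evZ pt c = 0"
  then obtain q where "q \<in> LR" "x = phiZ c * q" by (auto simp: dvd_in_def)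
  then show ?thesis using evL_mult[of "phiZ c" q pt] phiP_LR[of "cz c"] \<open>evZ pt c = 0\<close>
    by (simp add: evL_phiZ)
qed



lemma mono_factor:
  fixes p q :: "'a::idom poly"
  assumes "p * q = monom c s" "c \<noteq> 0"
  shows "\<exists>j a b. p = monom a j \<and> q = monom b (s - j) \<and> j \<le> s \<and> a * b = c"
  using assms
proof (induction s arbitrary: p q)
  case 0
  then have nz: "p \<noteq> 0" "q \<noteq> 0" by auto
  have "degree (p * q) = 0" using 0 by (simp add: monom_0)
  then have "degree p = 0" "degree q = 0" using degree_mult_eq[OF nz] by auto
  then have pq: "p = monom (coeff p 0) 0" "q = monom (coeff q 0) 0"
    by (auto simp: monom_0 elim!: degree_eq_zeroE)
  have "coeff p 0 * coeff q 0 = c" using 0 coeff_mult_0[of p q] by (simp add: monom_0)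
  then show ?case using pq by (intro exI[of _ 0] exI[of _ "coeff p 0"] exI[of _ "coeff q 0"]) simp
next
  case (Suc s)
  have "coeff p 0 * coeff q 0 = 0" using Suc.prems coeff_mult_0[of p q] by (simp add: monom_Suc)
  then consider "coeff p 0 = 0" | "coeff q 0 = 0" by auto
  then show ?case
  proof cases
    case 1
    obtain p' where p: "p = pCons 0 p'" using 1 by (cases p) auto
    have "pCons 0 (p' * q) = pCons 0 (monom c s)" using Suc.prems(1) by (simp add: p monom_Suc)
    then have "p' * q = monom c s" by simp
    then obtain j a b where "p' = monom a j" "q = monom b (s - j)" "j \<le> s" "a * b = c"
      using Suc.IH Suc.prems(2) by blast
    then show ?thesis by (intro exI[of _ "Suc j"] exI[of _ a] exI[of _ b]) (simp add: p monom_Suc)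
  next
    case 2
    obtain q' where q: "q = pCons 0 q'" using 2 by (cases q) auto
    have "pCons 0 (p * q') = pCons 0 (monom c s)" using Suc.prems(1) by (simp add: q monom_Suc)
    then have "p * q' = monom c s" by simp
    then obtain j a b where "p = monom a j" "q' = monom b (s - j)" "j \<le> s" "a * b = c"
      using Suc.IH Suc.prems(2) by blast
    moreover have "Suc s - j = Suc (s - j)" using \<open>j \<le> s\<close> by simp
    ultimately show ?thesis by (intro exI[of _ j] exI[of _ a] exI[of _ b]) (simp add: q monom_Suc)
  qed
qed

lemma KP_monom: "KP = monom (monom (monom (monom 1 1) 1) 1) 1"
  by (simp add: KP_def K0P_def K1P_def L0P_def L1P_def monom_Suc monom_0 pCons_one)

lemma czKP_monom: "cz c0 * KP ^ s = monom (monom (monom (monom c0 s) s) s) s"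
  by (simp add: KP_monom monom_power cz_def monom_0[symmetric] mult_monom)

lemma mono4:
  assumes "D * E = cz c0 * KP ^ s" "c0 \<noteq> 0"
  shows "\<exists>c M. D = cz c * M \<and> M dvd KP ^ s \<and> c dvd c0"
proof -
  have DE: "D * E = monom (monom (monom (monom c0 s) s) s) s" using assms(1) by (simp add: czKP_monom)
  obtain j4 d3 e3 where l4: "D = monom d3 j4" "E = monom e3 (s - j4)" "j4 \<le> s"
    "d3 * e3 = monom (monom (monom c0 s) s) s"
    using mono_factor[OF DE] assms(2) by auto
  obtain j3 d2 e2 where l3: "d3 = monom d2 j3" "j3 \<le> s" "d2 * e2 = monom (monom c0 s) s"
    using mono_factor[OF l4(4)] assms by auto
  obtain j2 d1 e1 where l2: "d2 = monom d1 j2" "j2 \<le> s" "d1 * e1 = monom c0 s"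
    using mono_factor[OF l3(3)] assms by auto
  obtain j1 c e where l1: "d1 = monom c j1" "j1 \<le> s" "c * e = c0"
    using mono_factor[OF l2(3)] assms by auto
  define M :: p9 where "M = monom (monom (monom (monom 1 j1) j2) j3) j4"
  have "D = cz c * M" by (simp add: l4 l3 l2 l1 M_def cz_def monom_0[symmetric] mult_monom)
  moreover have "M * monom (monom (monom (monom 1 (s - j1)) (s - j2)) (s - j3)) (s - j4) = KP ^ s"
    using l4(3) l3(2) l2(2) l1(2) by (simp add: M_def mult_monom KP_monom monom_power)
  then have "M dvd KP ^ s" by (metis dvd_triv_left)
  moreover have "c dvd c0" using l1(3) by (metis dvd_triv_left)
  ultimately show ?thesis by blast
qed

lemma lex_level:
  fixes X Y :: "'a::idom poly" and lmi :: "'a \<Rightarrow> 'b::linorder" and lci :: "'a \<Rightarrow> 'c"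
  assumes inner: "\<And>u v. u \<noteq> 0 \<Longrightarrow> v \<noteq> 0 \<Longrightarrow> lmi v < lmi u \<Longrightarrow>
                    u + v \<noteq> 0 \<and> lmi (u + v) = lmi u \<and> lci (u + v) = lci u"
    and nz: "X \<noteq> 0" "Y \<noteq> 0"
    and lt: "(degree Y, lmi (lead_coeff Y)) < (degree X, lmi (lead_coeff X))"
  shows "X + Y \<noteq> 0 \<and> degree (X + Y) = degree X \<and> lmi (lead_coeff (X + Y)) = lmi (lead_coeff X)
         \<and> lci (lead_coeff (X + Y)) = lci (lead_coeff X)"
proof (cases "degree Y < degree X")
  case True
  have d: "degree (X + Y) = degree X" by (rule degree_add_eq_left[OF True])
  have l: "lead_coeff (X + Y) = lead_coeff X"
    using lead_coeff_add_le[OF True] by (simp only: add.commute)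
  have "X + Y \<noteq> 0" using True d by auto
  then show ?thesis using d l by simp
next
  case False
  then have deq: "degree Y = degree X" and lt2: "lmi (lead_coeff Y) < lmi (lead_coeff X)" using lt by auto
  have lnz: "lead_coeff X \<noteq> 0" "lead_coeff Y \<noteq> 0" using nz by auto
  note i = inner[OF lnz lt2]
  have c: "coeff (X + Y) (degree X) = lead_coeff X + lead_coeff Y" using deq by simp
  then have cnz: "coeff (X + Y) (degree X) \<noteq> 0" using i by simp
  then have "degree X \<le> degree (X + Y)" by (rule le_degree)
  moreover have "degree (X + Y) \<le> degree X" using degree_add_le_max[of X Y] deq by simp
  ultimately have d: "degree (X + Y) = degree X" by simp
  have l: "lead_coeff (X + Y) = lead_coeff X + lead_coeff Y" using c d by (simp only:)
  have "X + Y \<noteq> 0" using cnz by (metis coeff_0)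
  then show ?thesis using i d l by (simp only:) simp
qed

type_synonym t1 = "za poly"
type_synonym t2 = "za poly poly"
type_synonym t3 = "za poly poly poly"

lemma lex1:
  fixes X Y :: t1
  assumes "X \<noteq> 0" "Y \<noteq> 0" "degree Y < degree X"
  shows "X + Y \<noteq> 0 \<and> degree (X + Y) = degree X \<and> lead_coeff (X + Y) = lead_coeff X"
proof -
  have d: "degree (X + Y) = degree X" by (rule degree_add_eq_left[OF assms(3)])
  have l: "lead_coeff (X + Y) = lead_coeff X"
    using lead_coeff_add_le[OF assms(3)] by (simp only: add.commute)
  have "X + Y \<noteq> 0" using assms(3) d by auto
  then show ?thesis using d l by blast
qed

definition lmi3 :: "t2 \<Rightarrow> nat \<times> nat" where "lmi3 x = (degree x, degree (lead_coeff x))"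

lemma lex2:
  fixes X Y :: t2
  assumes "X \<noteq> 0" "Y \<noteq> 0" "lmi3 Y < lmi3 X"
  shows "X + Y \<noteq> 0 \<and> lmi3 (X + Y) = lmi3 X \<and> lead_coeff (lead_coeff (X + Y)) = lead_coeff (lead_coeff X)"
proof -
  have "(degree Y, degree (lead_coeff Y)) < (degree X, degree (lead_coeff X))" using assms(3) by (simp only: lmi3_def)
  note h = lex_level[of degree lead_coeff, OF lex1 assms(1,2) this]
  then show ?thesis unfolding lmi3_def prod.inject by blast
qed

definition lmi4 :: "t3 \<Rightarrow> nat \<times> nat \<times> nat" where "lmi4 x = (degree x, lmi3 (lead_coeff x))"

lemma lex3:
  fixes X Y :: t3
  assumes "X \<noteq> 0" "Y \<noteq> 0" "lmi4 Y < lmi4 X"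
  shows "X + Y \<noteq> 0 \<and> lmi4 (X + Y) = lmi4 X
     \<and> lead_coeff (lead_coeff (lead_coeff (X + Y))) = lead_coeff (lead_coeff (lead_coeff X))"
proof -
  have "(degree Y, lmi3 (lead_coeff Y)) < (degree X, lmi3 (lead_coeff X))" using assms(3) by (simp only: lmi4_def)
  note h = lex_level[of lmi3 "\<lambda>x. lead_coeff (lead_coeff x)", OF lex2 assms(1,2) this]
  then show ?thesis unfolding lmi4_def prod.inject by blast
qed

definition lm4 :: "p9 \<Rightarrow> nat \<times> nat \<times> nat \<times> nat" where "lm4 X = (degree X, lmi4 (lead_coeff X))"
definition lc4 :: "p9 \<Rightarrow> za" where "lc4 X = lead_coeff (lead_coeff (lead_coeff (lead_coeff X)))"

lemma lex4:
  fixes X Y :: p9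
  assumes "X \<noteq> 0" "Y \<noteq> 0" "lm4 Y < lm4 X"
  shows "X + Y \<noteq> 0 \<and> lm4 (X + Y) = lm4 X \<and> lc4 (X + Y) = lc4 X"
proof -
  have "(degree Y, lmi4 (lead_coeff Y)) < (degree X, lmi4 (lead_coeff X))" using assms(3) by (simp only: lm4_def)
  note h = lex_level[of lmi4 "\<lambda>x. lead_coeff (lead_coeff (lead_coeff x))", OF lex3 assms(1,2) this]
  then show ?thesis unfolding lm4_def lc4_def prod.inject by blast
qed

lemma lm4_mult: "X \<noteq> 0 \<Longrightarrow> Y \<noteq> 0 \<Longrightarrow> lm4 (X * Y) = lm4 X + lm4 Y"
proof -
  assume nz: "X \<noteq> 0" "Y \<noteq> 0"
  have n1: "lead_coeff X \<noteq> 0" "lead_coeff Y \<noteq> 0" using nz by auto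
  have n2: "lead_coeff (lead_coeff X) \<noteq> 0" "lead_coeff (lead_coeff Y) \<noteq> 0" using n1 by auto
  have n3: "lead_coeff (lead_coeff (lead_coeff X)) \<noteq> 0" "lead_coeff (lead_coeff (lead_coeff Y)) \<noteq> 0" using n2 by auto
  show ?thesis
    unfolding lm4_def lmi4_def lmi3_def lead_coeff_mult
    by (simp only: degree_mult_eq[OF nz] degree_mult_eq[OF n1] degree_mult_eq[OF n2] degree_mult_eq[OF n3] add_Pair)
qed

lemma lc4_mult: "lc4 (X * Y) = lc4 X * lc4 Y"
  by (simp only: lc4_def lead_coeff_mult)

lemma lc4_nz: "X \<noteq> 0 \<Longrightarrow> lc4 X \<noteq> 0"
  by (simp add: lc4_def)

lemma lm4_KP_pow: "lm4 (KP ^ n) = (n, n, n, n)" and lc4_KP_pow: "lc4 (KP ^ n) = 1"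
  by (simp_all add: KP_monom monom_power lm4_def lmi4_def lmi3_def lc4_def degree_monom_eq)

lemma KP_nz: "KP \<noteq> 0"
  by (simp add: KP_monom)

lemma lm4_cz: "lm4 (cz c) = (0, 0, 0, 0)" and lc4_cz: "lc4 (cz c) = c"
  by (simp_all add: cz_def lm4_def lmi4_def lmi3_def lc4_def)

type_synonym v4 = "int \<times> int \<times> int \<times> int"

definition ti :: "nat \<times> nat \<times> nat \<times> nat \<Rightarrow> v4" where
  "ti v = (case v of (a, b, c, d) \<Rightarrow> (int a, int b, int c, int d))"
definition nt :: "nat \<Rightarrow> v4" where "nt N = (int N, int N, int N, int N)"

lemma ti_add: "ti (a + b) = ti a + ti b"
  by (cases a; cases b) (simp add: ti_def)

lemma ti_N: "ti (N, N, N, N) = nt N"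
  by (simp add: ti_def nt_def)

lemma nt_add: "nt (a + b) = nt a + nt b"
  by (simp add: nt_def)

lemma ti_less: "ti a - c < ti b - c \<longleftrightarrow> a < b"
  by (cases a; cases b; cases c) (auto simp: ti_def)

lemma v4_less_add: "(a::v4) < b \<Longrightarrow> a + c < b + c"
  by (cases a; cases b; cases c) auto

lemma v4_less_diff: "(a::v4) - c < b - c \<longleftrightarrow> a < b"
  by (cases a; cases b; cases c) auto

definition repL :: "lpoly \<Rightarrow> nat \<times> p9" where
  "repL x = (SOME p. x * KK ^ fst p = phiP (snd p))"

lemma repL: "x \<in> LR \<Longrightarrow> x * KK ^ fst (repL x) = phiP (snd (repL x))"
proof -
  assume "x \<in> LR"
  then obtain N X where "x * KK ^ N = phiP X" using rep_LR by blast
  then have "(\<lambda>p. x * KK ^ fst p = phiP (snd p)) (N, X)" by simp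
  then show ?thesis unfolding repL_def by (rule someI)
qed

definition lmL :: "lpoly \<Rightarrow> v4" where "lmL x = ti (lm4 (snd (repL x))) - nt (fst (repL x))"
definition lcL :: "lpoly \<Rightarrow> za" where "lcL x = lc4 (snd (repL x))"

lemma KK_nz: "KK ^ n \<noteq> 0"
proof
  assume h: "KK ^ n = 0"
  from KK_Kinv_pow[of n] have "(0::lpoly) = 1" by (simp add: h)
  then show False by simp
qed

lemma phiP_eq0: "phiP Z = 0 \<longleftrightarrow> Z = 0"
  using phiP_inj[of Z 0] by simp

lemma rep_nz: "x * KK ^ N = phiP X \<Longrightarrow> x \<noteq> 0 \<Longrightarrow> X \<noteq> 0"
  using KK_nz[of N] by auto

lemma lmL_rep:
  assumes "x \<in> LR" "x \<noteq> 0" "x * KK ^ N = phiP X"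
  shows "lmL x = ti (lm4 X) - nt N" "lcL x = lc4 X"
proof -
  define p where "p = repL x"
  have p: "x * KK ^ fst p = phiP (snd p)" using repL[OF assms(1)] by (simp add: p_def)
  have "phiP (X * KP ^ (fst p)) = phiP (snd p * KP ^ N)"
    by (simp add: phiP_simps KK_def[symmetric] assms(3)[symmetric] p[symmetric] ac_simps)
  then have eq: "X * KP ^ (fst p) = snd p * KP ^ N" by (simp add: phiP_inj)
  have nz: "X \<noteq> 0" "snd p \<noteq> 0" using rep_nz[OF assms(3,2)] rep_nz[OF p assms(2)] by auto
  have KPn: "KP ^ n \<noteq> 0" for n using KP_nz by simp
  have "lm4 X + (fst p, fst p, fst p, fst p) = lm4 (snd p) + (N, N, N, N)"
    using arg_cong[OF eq, of lm4] by (simp add: lm4_mult[OF nz(1) KPn] lm4_mult[OF nz(2) KPn] lm4_KP_pow)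
  then have "ti (lm4 X + (fst p, fst p, fst p, fst p)) = ti (lm4 (snd p) + (N, N, N, N))" by (simp only:)
  then have "ti (lm4 X) + nt (fst p) = ti (lm4 (snd p)) + nt N"
    by (simp only: ti_add ti_N)
  then show "lmL x = ti (lm4 X) - nt N" unfolding lmL_def p_def[symmetric]
    by (simp add: algebra_simps)
  show "lcL x = lc4 X" using arg_cong[OF eq, of lc4] by (simp add: lc4_mult lc4_KP_pow lcL_def p_def)
qed

lemma LR_nz_mult: "x \<noteq> 0 \<Longrightarrow> y \<noteq> 0 \<Longrightarrow> (x::lpoly) * y \<noteq> 0"
  by simp

lemma lmL_mult:
  assumes "x \<in> LR" "y \<in> LR" "x \<noteq> 0" "y \<noteq> 0"
  shows "lmL (x * y) = lmL x + lmL y" "lcL (x * y) = lcL x * lcL y"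
proof -
  obtain N X where x: "x * KK ^ N = phiP X" using rep_LR[OF assms(1)] by blast
  obtain M Y where y: "y * KK ^ M = phiP Y" using rep_LR[OF assms(2)] by blast
  have xy: "(x * y) * KK ^ (N + M) = phiP (X * Y)"
    by (simp add: phiP_simps power_add x[symmetric] y[symmetric] ac_simps)
  have nz: "X \<noteq> 0" "Y \<noteq> 0" using rep_nz[OF x assms(3)] rep_nz[OF y assms(4)] by auto
  note r = lmL_rep[OF LR_mult[OF assms(1,2)] LR_nz_mult[OF assms(3,4)] xy]
  note rx = lmL_rep[OF assms(1,3) x] and ry = lmL_rep[OF assms(2,4) y]
  show "lmL (x * y) = lmL x + lmL y" unfolding r(1) rx(1) ry(1) lm4_mult[OF nz] ti_add nt_add
    by (simp add: algebra_simps)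
  show "lcL (x * y) = lcL x * lcL y" using r(2) rx(2) ry(2) by (simp add: lc4_mult)
qed

lemma lmL_add:
  assumes "x \<in> LR" "y \<in> LR" "x \<noteq> 0" "y \<noteq> 0" "lmL y < lmL x"
  shows "x + y \<noteq> 0" "lmL (x + y) = lmL x" "lcL (x + y) = lcL x"
proof -
  obtain N X0 where x0: "x * KK ^ N = phiP X0" using rep_LR[OF assms(1)] by blast
  obtain M Y0 where y0: "y * KK ^ M = phiP Y0" using rep_LR[OF assms(2)] by blast
  define X where "X = X0 * KP ^ M"
  define Y where "Y = Y0 * KP ^ N"
  have x: "x * KK ^ (N + M) = phiP X"
    by (simp add: X_def phiP_simps power_add KK_def[symmetric] x0[symmetric] ac_simps)
  have y: "y * KK ^ (N + M) = phiP Y"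
    by (simp add: Y_def phiP_simps power_add KK_def[symmetric] y0[symmetric] ac_simps)
  have xy: "(x + y) * KK ^ (N + M) = phiP (X + Y)" by (simp add: phiP_simps x[symmetric] y[symmetric] algebra_simps)
  have nz: "X \<noteq> 0" "Y \<noteq> 0" using rep_nz[OF x assms(3)] rep_nz[OF y assms(4)] by auto
  note rx = lmL_rep[OF assms(1,3) x] and ry = lmL_rep[OF assms(2,4) y]
  have "lm4 Y < lm4 X" using assms(5) rx(1) ry(1) ti_less by simp
  note l = lex4[OF nz this]
  have "x + y \<noteq> 0" using l xy KK_nz[of "N + M"] phiP_eq0[of "X + Y"] by auto
  then show "x + y \<noteq> 0" .
  note r = lmL_rep[OF LR_add[OF assms(1,2)] \<open>x + y \<noteq> 0\<close> xy]
  show "lmL (x + y) = lmL x" "lcL (x + y) = lcL x" using r rx l by simp_all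
qed

lemma lmL_phiZ:
  assumes "c \<noteq> 0" shows "lmL (phiZ c) = 0" "lcL (phiZ c) = c"
proof -
  have e: "phiZ c * KK ^ 0 = phiP (cz c)" by simp
  have "phiZ c \<in> LR" using phiP_LR[of "cz c"] by simp
  moreover have "phiZ c \<noteq> 0" using assms phiZ_inj[of c 0] by simp
  ultimately show "lmL (phiZ c) = 0" "lcL (phiZ c) = c"
    using lmL_rep[OF _ _ e] by (simp_all add: lm4_cz lc4_cz ti_def nt_def)
qed



lemma common_div_const:
  assumes x: "x \<in> LR" "x \<noteq> 0" and d: "d \<in> LR" "dvd_in LR d x" "dvd_in LR d (phiZ c0)" and c0: "c0 \<noteq> 0"
  shows "\<exists>c u. c dvd c0 \<and> c dvd lcL x \<and> unit_in LR u \<and> d = phiZ c * u"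
proof -
  obtain a D where da: "d * KK ^ a = phiP D" using rep_LR[OF d(1)] by blast
  have c0r: "phiZ c0 * KK ^ 0 = phiP (cz c0)" by simp
  have c0LR: "phiZ c0 \<in> LR" using phiP_LR[of "cz c0"] by simp
  have "dvd_in LR (phiP D) (phiP (cz c0))" using dvd_in_rep[OF da c0r d(1) c0LR] d(3) by simp
  then obtain M where "D dvd cz c0 * KP ^ M" using dvd_transfer by blast
  then obtain E where "cz c0 * KP ^ M = D * E" by (rule dvdE)
  then obtain c Mo where cM: "D = cz c * Mo" "Mo dvd KP ^ M" "c dvd c0" using mono4[of D E c0 M] c0 by auto
  have uMo: "unit_in LR (phiP Mo)" using cM(2) unit_transfer by blast
  define u where "u = phiP Mo * Kinv ^ a"
  have u: "unit_in LR u" unfolding u_def by (rule unit_in_mult[OF uMo unit_Kinv_pow])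
  have deq: "d = phiZ c * u" using rep_eq[OF da] by (simp add: u_def cM(1) phiP_simps mult.assoc)
  obtain b X where xb: "x * KK ^ b = phiP X" using rep_LR[OF x(1)] by blast
  have "dvd_in LR (phiP D) (phiP X)" using dvd_in_rep[OF da xb d(1) x(1)] d(2) by simp
  then obtain M' where "D dvd X * KP ^ M'" using dvd_transfer by blast
  then obtain F where "X * KP ^ M' = D * F" by (rule dvdE)
  then have "lc4 (X * KP ^ M') = lc4 (cz c * Mo * F)" by (simp add: cM(1))
  then have "lc4 X = c * (lc4 Mo * lc4 F)"
    by (simp only: lc4_mult lc4_KP_pow lc4_cz mult.assoc mult_1_right)
  then have "c dvd lcL x" using lmL_rep(2)[OF x xb] by simp
  then show ?thesis using cM(3) u deq by blast
qed

lemma unit_phiZ: "is_unit c \<Longrightarrow> unit_in LR (phiZ c)"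
proof -
  assume "is_unit c"
  then obtain c' where "1 = c * c'" by (rule dvdE)
  then have "phiZ c * phiZ c' = 1" by (metis phiZ_1 phiZ_mult)
  then show ?thesis using phiP_LR[of "cz c"] phiP_LR[of "cz c'"] by (auto simp: unit_in_def)
qed

lemma coprime_const:
  assumes "x \<in> LR" "x \<noteq> 0" "c0 \<noteq> 0" "\<And>c. c dvd c0 \<Longrightarrow> c dvd lcL x \<Longrightarrow> is_unit c"
  shows "coprime_in LR x (phiZ c0)"
  unfolding coprime_in_def
proof (intro ballI impI)
  fix d assume "d \<in> LR" "dvd_in LR d x \<and> dvd_in LR d (phiZ c0)"
  then obtain c u where "c dvd c0" "c dvd lcL x" "unit_in LR u" "d = phiZ c * u"
    using common_div_const[OF assms(1,2)] assms(3) by blast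
  then show "unit_in LR d" using assms(4) unit_phiZ unit_in_mult by blast
qed

lemma coprime_prime_const:
  assumes "x \<in> LR" "x \<noteq> 0" "prime_elem A" "\<not> dvd_in LR (phiZ A) x"
  shows "coprime_in LR x (phiZ A)"
  unfolding coprime_in_def
proof (intro ballI impI)
  fix d assume d: "d \<in> LR" "dvd_in LR d x \<and> dvd_in LR d (phiZ A)"
  have A0: "A \<noteq> 0" using assms(3) by auto
  obtain c u where cu: "c dvd A" "unit_in LR u" "d = phiZ c * u"
    using common_div_const[OF assms(1,2) d(1)] d(2) A0 by blast
  obtain e where Ace: "A = c * e" using cu(1) by (rule dvdE)
  have "is_unit c \<or> is_unit e" using irreducibleD[OF prime_elem_imp_irreducible[OF assms(3)] Ace] .
  then show "unit_in LR d"
  proof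
    assume "is_unit c" then show ?thesis using cu unit_phiZ unit_in_mult by blast
  next
    assume "is_unit e"
    then obtain e' where e': "1 = e * e'" by (rule dvdE)
    have "c = A * e'" using Ace e' by (metis mult.assoc mult.right_neutral)
    then have "d = phiZ A * (phiZ e' * u)" using cu(3) by (simp add: phiZ_mult mult.assoc)
    moreover have "phiZ e' * u \<in> LR" using cu(2) phiP_LR[of "cz e'"] by (auto simp: unit_in_def intro: LR_mult)
    ultimately have "dvd_in LR (phiZ A) d" by (intro dvd_inI)
    then have "dvd_in LR (phiZ A) x" using d(2) dvd_in_trans by blast
    then show ?thesis using assms(4) by blast
  qed
qed

lemma prime_A6z: "prime_elem A6z"
  unfolding A6z_def by (rule prime_elem_linear_poly) simp_all

lemma prime_A3z: "prime_elem A3z"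
proof -
  have "prime_elem ([:0, 1:] :: int poly poly poly)" by (rule prime_elem_linear_poly) simp_all
  then show ?thesis unfolding A3z_def by (simp add: prime_elem_const_poly_iff)
qed

lemma prime_A1z: "prime_elem A1z"
proof -
  have "prime_elem ([:0, 1:] :: int poly)" by (rule prime_elem_linear_poly) simp_all
  then show ?thesis unfolding A1z_def by (simp add: prime_elem_const_poly_iff)
qed

definition Rz :: za where
  "Rz = (A1z * A6z - A3z ^ 2) ^ 2 + (A1z * A5z - A2z * A3z) * (A3z * A5z - A2z * A6z)"

definition Pz :: za where "Pz = A1z * A3z * A6z"

lemma evZ_dvd: "a dvd b \<Longrightarrow> evZ pt a dvd evZ pt b"
  by (auto elim!: dvdE simp: evZ_simps)

lemma not_dvd_by_eval: "evZ pt a = 0 \<Longrightarrow> evZ pt b \<noteq> 0 \<Longrightarrow> \<not> a dvd b"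
proof
  assume "evZ pt a = 0" "evZ pt b \<noteq> 0" "a dvd b"
  then have "(0::int) dvd evZ pt b" using evZ_dvd[of a b pt] by simp
  then show False using \<open>evZ pt b \<noteq> 0\<close> by simp
qed

lemma evZ_Rz: "evZ (b1, b2, b3, b5, b6) Rz = (b1 * b6 - b3 ^ 2) ^ 2 + (b1 * b5 - b2 * b3) * (b3 * b5 - b2 * b6)"
  by (simp add: Rz_def evZ_simps evZ_vars)

lemma Rz_coprime_Pz: "coprime Rz Pz"
proof -
  have "\<not> A6z dvd Rz" by (rule not_dvd_by_eval[of "(1,1,1,1,0)"]) (simp_all add: evZ_vars evZ_Rz)
  moreover have "\<not> A3z dvd Rz" by (rule not_dvd_by_eval[of "(1,0,0,1,1)"]) (simp_all add: evZ_vars evZ_Rz)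
  moreover have "\<not> A1z dvd Rz" by (rule not_dvd_by_eval[of "(0,1,1,1,1)"]) (simp_all add: evZ_vars evZ_Rz)
  ultimately have "coprime A6z Rz" "coprime A3z Rz" "coprime A1z Rz"
    using prime_elem_imp_coprime prime_A6z prime_A3z prime_A1z by blast+
  then show ?thesis unfolding Pz_def by (simp add: coprime_commute)
qed

lemma Rz_nz: "Rz \<noteq> 0"
  using evZ_Rz[of 1 1 1 1 0] evZ_simps(6) by force

lemma coprime_Rz:
  assumes "x \<in> LR" "x \<noteq> 0" "lcL x dvd Pz ^ N"
  shows "coprime_in LR x (phiZ Rz)"
proof (rule coprime_const[OF assms(1,2) Rz_nz])
  fix c assume "c dvd Rz" "c dvd lcL x"
  then have "c dvd Pz ^ N" using assms(3) dvd_trans by blast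
  moreover have "coprime Rz (Pz ^ N)" using Rz_coprime_Pz by simp
  ultimately show "is_unit c" using \<open>c dvd Rz\<close> coprime_common_divisor by blast
qed



lemma emb_inj: "emb p = emb q \<longleftrightarrow> p = q"
  by (simp add: eq_fract)

lemma emb_mult: "emb (p * q) = emb p * emb q"
  by (simp add: mult_fract)

lemma emb_add: "emb (p + q) = emb p + emb q"
  by (simp add: add_fract)

lemma emb_power: "emb (p ^ n) = emb p ^ n"
  by (induction n) (simp_all add: emb_mult Fract_le_one_iff One_fract_def)

lemma emb_0: "emb 0 = 0" by (simp add: Zero_fract_def)

lemma emb_div: "y \<noteq> 0 \<Longrightarrow> A = y * q \<Longrightarrow> emb A / emb y = emb q"
  by (simp add: divide_fract eq_fract)

lemma emb_nz: "p \<noteq> 0 \<Longrightarrow> emb p \<noteq> 0"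
  using emb_inj[of p 0] emb_0 by simp

lemma state_eq: "state n = (kseq n, lseq n, kseq (Suc n), lseq (Suc n))"
proof -
  obtain a b c d where s: "state n = (a, b, c, d)" by (cases "state n") auto
  show ?thesis unfolding kseq_def lseq_def by (simp add: s)
qed

lemma state_Suc_eq: "state (Suc n) = (kseq (Suc n), lseq (Suc n),
   (emb a3 * kseq (Suc n) ^ 2 + emb a5 * kseq (Suc n) * lseq (Suc n) + emb a6 * lseq (Suc n) ^ 2) / kseq n,
   (emb a1 * kseq (Suc n) ^ 2 + emb a2 * kseq (Suc n) * lseq (Suc n) + emb a3 * lseq (Suc n) ^ 2) / lseq n)"
  by (simp only: state.simps(2) state_eq[of n] prod.case)

lemma kseq_SS: "kseq (Suc (Suc n)) = (emb a3 * kseq (Suc n) ^ 2 + emb a5 * kseq (Suc n) * lseq (Suc n) + emb a6 * lseq (Suc n) ^ 2) / kseq n"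
proof -
  have "kseq (Suc (Suc n)) = fst (state (Suc (Suc n)))" by (rule kseq_def)
  also have "\<dots> = fst (case state (Suc n) of (k, l, k', l') \<Rightarrow>
      (k', l', (emb a3 * k'^2 + emb a5 * k' * l' + emb a6 * l'^2) / k,
       (emb a1 * k'^2 + emb a2 * k' * l' + emb a3 * l'^2) / l))" by (simp only: state.simps(2))
  finally show ?thesis by (simp only: state_Suc_eq prod.case fst_conv snd_conv)
qed

lemma lseq_SS: "lseq (Suc (Suc n)) = (emb a1 * kseq (Suc n) ^ 2 + emb a2 * kseq (Suc n) * lseq (Suc n) + emb a3 * lseq (Suc n) ^ 2) / lseq n"
proof -
  have "lseq (Suc (Suc n)) = fst (snd (state (Suc (Suc n))))" by (rule lseq_def)
  also have "\<dots> = fst (snd (case state (Suc n) of (k, l, k', l') \<Rightarrow>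
      (k', l', (emb a3 * k'^2 + emb a5 * k' * l' + emb a6 * l'^2) / k,
       (emb a1 * k'^2 + emb a2 * k' * l' + emb a3 * l'^2) / l)))" by (simp only: state.simps(2))
  finally show ?thesis by (simp only: state_Suc_eq prod.case fst_conv snd_conv)
qed

definition QA :: "lpoly \<Rightarrow> lpoly \<Rightarrow> lpoly" where "QA k l = a3 * k ^ 2 + a5 * k * l + a6 * l ^ 2"
definition QB :: "lpoly \<Rightarrow> lpoly \<Rightarrow> lpoly" where "QB k l = a1 * k ^ 2 + a2 * k * l + a3 * l ^ 2"

lemma kseq_rec: "kseq (Suc (Suc n)) = emb (QA K L) / kseq n"
  if "kseq (Suc n) = emb K" "lseq (Suc n) = emb L"
proof -
  have "emb (QA K L) = emb a3 * emb K ^ 2 + emb a5 * emb K * emb L + emb a6 * emb L ^ 2"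
    by (simp only: QA_def emb_add emb_mult emb_power)
  then show ?thesis using kseq_SS[of n] that by (simp only:)
qed

lemma lseq_rec: "lseq (Suc (Suc n)) = emb (QB K L) / lseq n"
  if "kseq (Suc n) = emb K" "lseq (Suc n) = emb L"
proof -
  have "emb (QB K L) = emb a1 * emb K ^ 2 + emb a2 * emb K * emb L + emb a3 * emb L ^ 2"
    by (simp only: QB_def emb_add emb_mult emb_power)
  then show ?thesis using lseq_SS[of n] that by (simp only:)
qed

lemma kseq_0: "kseq 0 = emb k0" and kseq_1: "kseq 1 = emb k1"
  and lseq_0: "lseq 0 = emb l0" and lseq_1: "lseq 1 = emb l1"
  by (simp_all only: kseq_def lseq_def state.simps One_nat_def prod.case fst_conv snd_conv)

lemma idK:
  fixes a3 a5 a6 k l Kp Lp al be :: "'a::idom"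
  shows "a3 * (a6 * l^2 + k * al)^2 * Lp^2 + a5 * (a6 * l^2 + k * al) * (a3 * l^2 + k * be) * Kp * Lp
        + a6 * (a3 * l^2 + k * be)^2 * Kp^2
       = k * (a3 * (2 * a6 * l^2 * al + k * al^2) * Lp^2 + a5 * (a6 * l^2 * be + a3 * l^2 * al + k * al * be) * Kp * Lp
              + a6 * (2 * a3 * l^2 * be + k * be^2) * Kp^2)
         + a3 * a6 * l^4 * (a3 * Kp^2 + a5 * Kp * Lp + a6 * Lp^2)"
  unfolding power2_eq_square power4_eq_xxxx by algebra

lemma idL:
  fixes a1 a2 a3 k l Kp Lp ga de :: "'a::idom"
  shows "a1 * (a3 * k^2 + l * ga)^2 * Lp^2 + a2 * (a3 * k^2 + l * ga) * (a1 * k^2 + l * de) * Kp * Lp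
        + a3 * (a1 * k^2 + l * de)^2 * Kp^2
       = l * (a1 * (2 * a3 * k^2 * ga + l * ga^2) * Lp^2 + a2 * (a3 * k^2 * de + a1 * k^2 * ga + l * ga * de) * Kp * Lp
              + a3 * (2 * a1 * k^2 * de + l * de^2) * Kp^2)
         + a1 * a3 * k^4 * (a1 * Kp^2 + a2 * Kp * Lp + a3 * Lp^2)"
  unfolding power2_eq_square power4_eq_xxxx by algebra

lemma idScale:
  fixes c1 c2 c3 x y Kp Lp :: "'a::idom"
  shows "(c1 * x^2 + c2 * x * y + c3 * y^2) * (Kp^2 * Lp^2) = c1 * (x * Kp)^2 * Lp^2 + c2 * (x * Kp) * (y * Lp) * Kp * Lp + c3 * (y * Lp)^2 * Kp^2"
  unfolding power2_eq_square by algebra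



lemma a_phiZ: "a1 = phiZ A1z" "a2 = phiZ A2z" "a3 = phiZ A3z" "a5 = phiZ A5z" "a6 = phiZ A6z"
  by (simp_all add: phiZ_vars a1_def a2_def a3_def a5_def a6_def)

lemma phiZ_LR: "phiZ c \<in> LR"
  using phiP_LR[of "cz c"] by simp

lemma phiZ_nz: "c \<noteq> 0 \<Longrightarrow> phiZ c \<noteq> 0"
  using phiZ_inj[of c 0] by simp

lemma Az_nz: "A1z \<noteq> 0" "A2z \<noteq> 0" "A3z \<noteq> 0" "A5z \<noteq> 0" "A6z \<noteq> 0"
  by (simp_all add: A1z_def A2z_def A3z_def A5z_def A6z_def)

lemma v4_lt_add_left: "(a::v4) < b \<Longrightarrow> c + a < c + b"
  using v4_less_add[of a b c] by (simp add: add.commute)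

lemma quad_lead:
  assumes xy: "x \<in> LR" "y \<in> LR" "x \<noteq> 0" "y \<noteq> 0" and c: "c1 \<noteq> 0" "c2 \<noteq> 0" "c3 \<noteq> 0"
    and lt: "lmL y < lmL x"
  shows "phiZ c1 * x ^ 2 + phiZ c2 * x * y + phiZ c3 * y ^ 2 \<noteq> 0 \<and>
         lmL (phiZ c1 * x ^ 2 + phiZ c2 * x * y + phiZ c3 * y ^ 2) = lmL x + lmL x \<and>
         lcL (phiZ c1 * x ^ 2 + phiZ c2 * x * y + phiZ c3 * y ^ 2) = c1 * lcL x ^ 2"
proof -
  have cLR: "phiZ c1 \<in> LR" "phiZ c2 \<in> LR" "phiZ c3 \<in> LR" by (simp_all add: phiZ_LR)
  have cnz: "phiZ c1 \<noteq> 0" "phiZ c2 \<noteq> 0" "phiZ c3 \<noteq> 0" using c by (simp_all add: phiZ_nz)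
  have xx: "x * x \<in> LR" "x * x \<noteq> 0" using xy by (simp_all add: LR_mult)
  have yy: "y * y \<in> LR" "y * y \<noteq> 0" using xy by (simp_all add: LR_mult)
  define T1 where "T1 = phiZ c1 * (x * x)"
  define T2 where "T2 = phiZ c2 * x * y"
  define T3 where "T3 = phiZ c3 * (y * y)"
  have T1: "T1 \<in> LR" "T1 \<noteq> 0" "lmL T1 = lmL x + lmL x" "lcL T1 = c1 * lcL x ^ 2"
    using lmL_mult[OF cLR(1) xx(1) cnz(1) xx(2)] lmL_mult[OF xy(1) xy(1) xy(3) xy(3)] lmL_phiZ[OF c(1)]
      cnz xx cLR by (simp_all add: T1_def LR_mult power2_eq_square)
  have cx: "phiZ c2 * x \<in> LR" "phiZ c2 * x \<noteq> 0" using cLR xy cnz by (simp_all add: LR_mult)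
  have T2: "T2 \<in> LR" "T2 \<noteq> 0" "lmL T2 = lmL x + lmL y"
    using lmL_mult[OF cx(1) xy(2) cx(2) xy(4)] lmL_mult[OF cLR(2) xy(1) cnz(2) xy(3)] lmL_phiZ[OF c(2)]
      cx xy by (simp_all add: T2_def LR_mult)
  have T3: "T3 \<in> LR" "T3 \<noteq> 0" "lmL T3 = lmL y + lmL y"
    using lmL_mult[OF cLR(3) yy(1) cnz(3) yy(2)] lmL_mult[OF xy(2) xy(2) xy(4) xy(4)] lmL_phiZ[OF c(3)]
      cnz yy cLR by (simp_all add: T3_def LR_mult)
  have lt32: "lmL T3 < lmL T2" using T2(3) T3(3) v4_less_add[OF lt, of "lmL y"] by simp
  have lt21: "lmL T2 < lmL T1" using T1(3) T2(3) v4_lt_add_left[OF lt, of "lmL x"] by simp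
  note S = lmL_add[OF T2(1) T3(1) T2(2) T3(2) lt32]
  have SLR: "T2 + T3 \<in> LR" using T2(1) T3(1) by (rule LR_add)
  have "lmL (T2 + T3) < lmL T1" using S(2) lt21 by simp
  note F = lmL_add[OF T1(1) SLR T1(2) S(1) this]
  have eq: "phiZ c1 * x ^ 2 + phiZ c2 * x * y + phiZ c3 * y ^ 2 = T1 + (T2 + T3)"
    by (simp add: T1_def T2_def T3_def power2_eq_square add.assoc)
  show ?thesis unfolding eq using F T1 by simp
qed

lemma quad_swap: "(c1::'a::comm_ring_1) * x ^ 2 + c2 * x * y + c3 * y ^ 2 = c3 * y ^ 2 + c2 * y * x + c1 * x ^ 2"
  by (simp add: algebra_simps)

lemma quad_lead2:
  assumes xy: "x \<in> LR" "y \<in> LR" "x \<noteq> 0" "y \<noteq> 0" and c: "c1 \<noteq> 0" "c2 \<noteq> 0" "c3 \<noteq> 0"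
    and lt: "lmL x < lmL y"
  shows "phiZ c1 * x ^ 2 + phiZ c2 * x * y + phiZ c3 * y ^ 2 \<noteq> 0 \<and>
         lmL (phiZ c1 * x ^ 2 + phiZ c2 * x * y + phiZ c3 * y ^ 2) = lmL y + lmL y \<and>
         lcL (phiZ c1 * x ^ 2 + phiZ c2 * x * y + phiZ c3 * y ^ 2) = c3 * lcL y ^ 2"
proof -
  have eq: "phiZ c1 * x ^ 2 + phiZ c2 * x * y + phiZ c3 * y ^ 2 = phiZ c3 * y ^ 2 + phiZ c2 * y * x + phiZ c1 * x ^ 2"
    by (rule quad_swap)
  show ?thesis unfolding eq using quad_lead[OF xy(2,1,4,3) c(3,2,1) lt] .
qed

lemma new_term:
  assumes k: "k \<in> LR" "k \<noteq> 0" and l: "l \<in> LR" "l \<noteq> 0" and kp: "kp \<in> LR" "kp \<noteq> 0"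
    and q: "q \<in> LR" "q * kp = phiZ c1 * k ^ 2 + phiZ c2 * k * l + phiZ c3 * l ^ 2"
    and c: "c1 \<noteq> 0" "c2 \<noteq> 0" "c3 \<noteq> 0" "c1 dvd Pz" "c3 dvd Pz"
    and lc: "lcL k dvd Pz ^ N1" "lcL l dvd Pz ^ N2"
    and ne: "lmL k \<noteq> lmL l"
  shows "q \<noteq> 0" "\<exists>N. lcL q dvd Pz ^ N"
    "lmL q = (if lmL l < lmL k then lmL k + lmL k else lmL l + lmL l) - lmL kp"
proof -
  define Q where "Q = phiZ c1 * k ^ 2 + phiZ c2 * k * l + phiZ c3 * l ^ 2"
  have QQ: "Q \<noteq> 0 \<and> lmL Q = (if lmL l < lmL k then lmL k + lmL k else lmL l + lmL l) \<and>
        (lcL Q = c1 * lcL k ^ 2 \<or> lcL Q = c3 * lcL l ^ 2)"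
  proof (cases "lmL l < lmL k")
    case True then show ?thesis using quad_lead[OF k(1) l(1) k(2) l(2) c(1-3)] by (simp add: Q_def)
  next
    case False
    then have "lmL k < lmL l" using ne by (auto simp: not_less order.order_iff_strict)
    then show ?thesis using quad_lead2[OF k(1) l(1) k(2) l(2) c(1-3)] False by (simp add: Q_def)
  qed
  show qnz: "q \<noteq> 0" using QQ q(2) by (auto simp: Q_def)
  note m = lmL_mult[OF q(1) kp(1) qnz kp(2)]
  have "lmL Q = lmL q + lmL kp" "lcL Q = lcL q * lcL kp" using m q(2) by (simp_all add: Q_def)
  then show "lmL q = (if lmL l < lmL k then lmL k + lmL k else lmL l + lmL l) - lmL kp"
    using QQ by (simp add: algebra_simps)
  have "lcL q dvd lcL Q" using \<open>lcL Q = lcL q * lcL kp\<close> by simp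
  moreover have "lcL Q dvd Pz ^ (Suc (N1 + N1 + N2 + N2))"
  proof -
    have "c1 * lcL k ^ 2 dvd Pz * (Pz ^ N1 * Pz ^ N1)"
      using mult_dvd_mono[OF c(4) mult_dvd_mono[OF lc(1) lc(1)]] by (simp add: power2_eq_square)
    moreover have "c3 * lcL l ^ 2 dvd Pz * (Pz ^ N2 * Pz ^ N2)"
      using mult_dvd_mono[OF c(5) mult_dvd_mono[OF lc(2) lc(2)]] by (simp add: power2_eq_square)
    moreover have "Pz * (Pz ^ N1 * Pz ^ N1) dvd Pz ^ (Suc (N1 + N1 + N2 + N2))"
      by (simp add: power_add[symmetric] le_imp_power_dvd)
    moreover have "Pz * (Pz ^ N2 * Pz ^ N2) dvd Pz ^ (Suc (N1 + N1 + N2 + N2))"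
      by (simp add: power_add[symmetric] le_imp_power_dvd)
    ultimately show ?thesis using QQ
    proof -
      assume h1: "c1 * lcL k ^ 2 dvd Pz * (Pz ^ N1 * Pz ^ N1)" and h2: "c3 * lcL l ^ 2 dvd Pz * (Pz ^ N2 * Pz ^ N2)"
        and h3: "Pz * (Pz ^ N1 * Pz ^ N1) dvd Pz ^ (Suc (N1 + N1 + N2 + N2))"
        and h4: "Pz * (Pz ^ N2 * Pz ^ N2) dvd Pz ^ (Suc (N1 + N1 + N2 + N2))"
      from QQ have "lcL Q = c1 * lcL k ^ 2 \<or> lcL Q = c3 * lcL l ^ 2" by blast
      then show ?thesis
      proof
        assume "lcL Q = c1 * lcL k ^ 2" then show ?thesis using dvd_trans[OF h1 h3] by simp
      next
        assume "lcL Q = c3 * lcL l ^ 2" then show ?thesis using dvd_trans[OF h2 h4] by simp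
      qed
    qed
  qed
  ultimately show "\<exists>N. lcL q dvd Pz ^ N" using dvd_trans by blast
qed



lemma hl:
  assumes "d \<in> LR" "x \<in> LR" "y \<in> LR" "c \<in> LR" "dvd_in LR d x" "coprime_in LR x y" "coprime_in LR x c"
    "dvd_in LR d (c * y ^ 2)"
  shows "unit_in LR d"
proof -
  have "coprime_in LR d y" using coprime_in_dvd[OF assms(1,5,6)] .
  then have "coprime_in LR d (y ^ 2)" using coprime_in_power[OF assms(1,3)] by blast
  then have "dvd_in LR d c" using euclid_LR'[OF assms(1) LR_power[OF assms(3)] assms(4)] assms(8) by blast
  moreover have "coprime_in LR d c" using coprime_in_dvd[OF assms(1,5,7)] .
  ultimately show ?thesis using assms(1) dvd_in_refl by (auto simp: coprime_in_def)
qed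

lemma gA1: "(b3::'a::comm_ring_1) * k^2 + b5 * k * l + b6 * l^2 - k * (b3 * k + b5 * l) = b6 * l^2"
  by (simp add: algebra_simps power2_eq_square)
lemma gB1: "(b1::'a::comm_ring_1) * k^2 + b2 * k * l + b3 * l^2 - k * (b1 * k + b2 * l) = b3 * l^2"
  by (simp add: algebra_simps power2_eq_square)
lemma gA2: "(b3::'a::comm_ring_1) * k^2 + b5 * k * l + b6 * l^2 - l * (b5 * k + b6 * l) = b3 * k^2"
  by (simp add: algebra_simps power2_eq_square)
lemma gB2: "(b1::'a::comm_ring_1) * k^2 + b2 * k * l + b3 * l^2 - l * (b2 * k + b3 * l) = b1 * k^2"
  by (simp add: algebra_simps power2_eq_square)
lemma gC1: "(b1::'a::idom) * (b3 * k^2 + b5 * k * l + b6 * l^2) - b3 * (b1 * k^2 + b2 * k * l + b3 * l^2)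
   = ((b1 * b5 - b2 * b3) * k + (b1 * b6 - b3^2) * l) * l"
  unfolding power2_eq_square by algebra
lemma gC2: "(b3::'a::idom) * (b3 * k^2 + b5 * k * l + b6 * l^2) - b6 * (b1 * k^2 + b2 * k * l + b3 * l^2)
   = ((b3^2 - b1 * b6) * k + (b3 * b5 - b2 * b6) * l) * k"
  unfolding power2_eq_square by algebra
lemma gC3: "((b1::'a::idom) * b5 - b2 * b3) * ((b3^2 - b1 * b6) * k + (b3 * b5 - b2 * b6) * l)
     - (b3^2 - b1 * b6) * ((b1 * b5 - b2 * b3) * k + (b1 * b6 - b3^2) * l)
   = ((b1 * b6 - b3 ^ 2) ^ 2 + (b1 * b5 - b2 * b3) * (b3 * b5 - b2 * b6)) * l"
  unfolding power2_eq_square by algebra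

lemma phiZ_Rz: "phiZ Rz = (a1 * a6 - a3 ^ 2) ^ 2 + (a1 * a5 - a2 * a3) * (a3 * a5 - a2 * a6)"
  by (simp only: Rz_def phiZ_simps a_phiZ)

lemma a_LR: "a1 \<in> LR" "a2 \<in> LR" "a3 \<in> LR" "a5 \<in> LR" "a6 \<in> LR"
  by (simp_all add: a_phiZ phiZ_LR)

lemma QA_LR: "k \<in> LR \<Longrightarrow> l \<in> LR \<Longrightarrow> QA k l \<in> LR"
  by (simp add: QA_def LR_add LR_mult LR_power a_LR)
lemma QB_LR: "k \<in> LR \<Longrightarrow> l \<in> LR \<Longrightarrow> QB k l \<in> LR"
  by (simp add: QB_def LR_add LR_mult LR_power a_LR)

lemma coprime_step:
  assumes LR: "kp \<in> LR" "lp \<in> LR" "k \<in> LR" "l \<in> LR" "kn \<in> LR" "lq \<in> LR"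
    and rel: "kn * kp = QA k l" "lq * lp = QB k l"
    and cop: "coprime_in LR k l"
    and nd: "\<not> dvd_in LR a6 k" "\<not> dvd_in LR a3 k" "\<not> dvd_in LR a3 l" "\<not> dvd_in LR a1 l"
    and nz: "k \<noteq> 0" "l \<noteq> 0" "kn \<noteq> 0"
    and lc: "lcL kn dvd Pz ^ N"
  shows "coprime_in LR k kn" "coprime_in LR k lq" "coprime_in LR l kn" "coprime_in LR l lq" "coprime_in LR kn lq"
proof -
  have cl: "coprime_in LR l k" using cop by (rule coprime_in_sym)
  have pa6k: "coprime_in LR k a6" using coprime_prime_const[OF LR(3) nz(1) prime_A6z] nd(1) by (simp add: a_phiZ)
  have pa3k: "coprime_in LR k a3" using coprime_prime_const[OF LR(3) nz(1) prime_A3z] nd(2) by (simp add: a_phiZ)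
  have pa3l: "coprime_in LR l a3" using coprime_prime_const[OF LR(4) nz(2) prime_A3z] nd(3) by (simp add: a_phiZ)
  have pa1l: "coprime_in LR l a1" using coprime_prime_const[OF LR(4) nz(2) prime_A1z] nd(4) by (simp add: a_phiZ)
  have dA: "dvd_in LR d (QA k l)" if "d \<in> LR" "dvd_in LR d kn" for d
    using dvd_in_mult_right[OF LR(1) that(2)] rel(1) by simp
  have dB: "dvd_in LR d (QB k l)" if "d \<in> LR" "dvd_in LR d lq" for d
    using dvd_in_mult_right[OF LR(2) that(2)] rel(2) by simp
  show c1: "coprime_in LR k kn" unfolding coprime_in_def
  proof (intro ballI impI)
    fix d assume d: "d \<in> LR" "dvd_in LR d k \<and> dvd_in LR d kn"
    have "dvd_in LR d (QA k l - k * (a3 * k + a5 * l))"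
      using dvd_in_diff[OF dA[OF d(1)] dvd_in_mult_right] d LR a_LR by (simp add: LR_add LR_mult)
    then have "dvd_in LR d (a6 * l ^ 2)" by (simp only: QA_def gA1)
    then show "unit_in LR d" using hl[OF d(1) LR(3) LR(4) a_LR(5)] d cop pa6k by blast
  qed
  show c2: "coprime_in LR k lq" unfolding coprime_in_def
  proof (intro ballI impI)
    fix d assume d: "d \<in> LR" "dvd_in LR d k \<and> dvd_in LR d lq"
    have "dvd_in LR d (QB k l - k * (a1 * k + a2 * l))"
      using dvd_in_diff[OF dB[OF d(1)] dvd_in_mult_right] d LR a_LR by (simp add: LR_add LR_mult)
    then have "dvd_in LR d (a3 * l ^ 2)" by (simp only: QB_def gB1)
    then show "unit_in LR d" using hl[OF d(1) LR(3) LR(4) a_LR(3)] d cop pa3k by blast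
  qed
  show c3: "coprime_in LR l kn" unfolding coprime_in_def
  proof (intro ballI impI)
    fix d assume d: "d \<in> LR" "dvd_in LR d l \<and> dvd_in LR d kn"
    have "dvd_in LR d (QA k l - l * (a5 * k + a6 * l))"
      using dvd_in_diff[OF dA[OF d(1)] dvd_in_mult_right] d LR a_LR by (simp add: LR_add LR_mult)
    then have "dvd_in LR d (a3 * k ^ 2)" by (simp only: QA_def gA2)
    then show "unit_in LR d" using hl[OF d(1) LR(4) LR(3) a_LR(3)] d cl pa3l by blast
  qed
  show c4: "coprime_in LR l lq" unfolding coprime_in_def
  proof (intro ballI impI)
    fix d assume d: "d \<in> LR" "dvd_in LR d l \<and> dvd_in LR d lq"
    have "dvd_in LR d (QB k l - l * (a2 * k + a3 * l))"
      using dvd_in_diff[OF dB[OF d(1)] dvd_in_mult_right] d LR a_LR by (simp add: LR_add LR_mult)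
    then have "dvd_in LR d (a1 * k ^ 2)" by (simp only: QB_def gB2)
    then show "unit_in LR d" using hl[OF d(1) LR(4) LR(3) a_LR(1)] d cl pa1l by blast
  qed
  show "coprime_in LR kn lq" unfolding coprime_in_def
  proof (intro ballI impI)
    fix d assume d: "d \<in> LR" "dvd_in LR d kn \<and> dvd_in LR d lq"
    have dk: "coprime_in LR d k" using coprime_in_dvd[OF d(1) _ coprime_in_sym[OF c1]] d by blast
    have dl: "coprime_in LR d l" using coprime_in_dvd[OF d(1) _ coprime_in_sym[OF c3]] d by blast
    have A: "dvd_in LR d (QA k l)" and B: "dvd_in LR d (QB k l)" using dA dB d by auto
    have e1LR: "(a1 * a5 - a2 * a3) * k + (a1 * a6 - a3^2) * l \<in> LR"
      using LR a_LR by (simp add: LR_add LR_diff LR_mult LR_power)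
    have e2LR: "(a3^2 - a1 * a6) * k + (a3 * a5 - a2 * a6) * l \<in> LR"
      using LR a_LR by (simp add: LR_add LR_diff LR_mult LR_power)
    have "dvd_in LR d (a1 * QA k l - a3 * QB k l)"
      using dvd_in_diff[OF dvd_in_mult_left[OF a_LR(1) A] dvd_in_mult_left[OF a_LR(3) B]] .
    then have "dvd_in LR d (((a1 * a5 - a2 * a3) * k + (a1 * a6 - a3^2) * l) * l)"
      by (simp only: QA_def QB_def gC1)
    then have e1: "dvd_in LR d ((a1 * a5 - a2 * a3) * k + (a1 * a6 - a3^2) * l)"
      using euclid_LR'[OF d(1) LR(4) e1LR dl] by blast
    have "dvd_in LR d (a3 * QA k l - a6 * QB k l)"
      using dvd_in_diff[OF dvd_in_mult_left[OF a_LR(3) A] dvd_in_mult_left[OF a_LR(5) B]] .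
    then have "dvd_in LR d (((a3^2 - a1 * a6) * k + (a3 * a5 - a2 * a6) * l) * k)"
      by (simp only: QA_def QB_def gC2)
    then have e2: "dvd_in LR d ((a3^2 - a1 * a6) * k + (a3 * a5 - a2 * a6) * l)"
      using euclid_LR'[OF d(1) LR(3) e2LR dk] by blast
    have c1LR: "a1 * a5 - a2 * a3 \<in> LR" and c3LR: "a3^2 - a1 * a6 \<in> LR"
      using a_LR by (simp_all add: LR_diff LR_mult LR_power)
    have "dvd_in LR d ((a1 * a5 - a2 * a3) * ((a3^2 - a1 * a6) * k + (a3 * a5 - a2 * a6) * l)
         - (a3^2 - a1 * a6) * ((a1 * a5 - a2 * a3) * k + (a1 * a6 - a3^2) * l))"
      using dvd_in_diff[OF dvd_in_mult_left[OF c1LR e2] dvd_in_mult_left[OF c3LR e1]] .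
    then have "dvd_in LR d (phiZ Rz * l)" by (simp only: gC3 phiZ_Rz)
    then have dR: "dvd_in LR d (phiZ Rz)" using euclid_LR'[OF d(1) LR(4) phiZ_LR dl] by blast
    have "coprime_in LR kn (phiZ Rz)" using coprime_Rz[OF LR(5) nz(3) lc] .
    then have "coprime_in LR d (phiZ Rz)" using coprime_in_dvd[OF d(1)] d by blast
    then show "unit_in LR d" using dR d(1) dvd_in_refl by (auto simp: coprime_in_def)
  qed
qed



lemma gX: "(b3::'a::comm_ring_1) * k^2 + b5 * k * l + b6 * l^2 = b6 * l^2 + k * (b3 * k + b5 * l)"
  by (simp add: algebra_simps power2_eq_square)
lemma gY: "(b3::'a::comm_ring_1) * k^2 + b5 * k * l + b6 * l^2 = b3 * k^2 + l * (b5 * k + b6 * l)"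
  by (simp add: algebra_simps power2_eq_square)
lemma gZ: "(k::'a::comm_ring_1) * W + c * (k * kpp) = k * (W + c * kpp)"
  by (simp add: algebra_simps)

lemma LR_2: "(2::lpoly) \<in> LR"
proof -
  have "(2::lpoly) = 1 + 1" by simp
  then show ?thesis using LR_add[OF LR_1 LR_1] by simp
qed

lemma laurent_k:
  assumes LR: "Kp \<in> LR" "Lp \<in> LR" "k \<in> LR" "l \<in> LR" "km \<in> LR" "lm \<in> LR" "kpp \<in> LR"
    and rel: "km * Kp = QA k l" "lm * Lp = QB k l" "k * kpp = QA Kp Lp"
    and cop: "coprime_in LR k Kp" "coprime_in LR k Lp"
  shows "dvd_in LR k (QA km lm)"
proof -
  define al where "al = a3 * k + a5 * l"
  define be where "be = a1 * k + a2 * l"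
  define W0 where "W0 = a3 * (2 * a6 * l^2 * al + k * al^2) * Lp^2 + a5 * (a6 * l^2 * be + a3 * l^2 * al + k * al * be) * Kp * Lp
              + a6 * (2 * a3 * l^2 * be + k * be^2) * Kp^2"
  have r1: "km * Kp = a6 * l^2 + k * al" using rel(1) unfolding QA_def al_def by (simp only: gX)
  have r2: "lm * Lp = a3 * l^2 + k * be" using rel(2) unfolding QB_def be_def by (simp only: gX)
  have "QA km lm * (Kp^2 * Lp^2) = a3 * (km * Kp)^2 * Lp^2 + a5 * (km * Kp) * (lm * Lp) * Kp * Lp + a6 * (lm * Lp)^2 * Kp^2"
    unfolding QA_def by (rule idScale)
  also have "\<dots> = k * W0 + a3 * a6 * l^4 * (a3 * Kp^2 + a5 * Kp * Lp + a6 * Lp^2)"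
    unfolding r1 r2 W0_def by (rule idK)
  also have "\<dots> = k * (W0 + a3 * a6 * l^4 * kpp)"
    by (simp only: rel(3)[unfolded QA_def, symmetric] gZ)
  finally have eq: "QA km lm * (Kp^2 * Lp^2) = k * (W0 + a3 * a6 * l^4 * kpp)" .
  have WLR: "W0 + a3 * a6 * l^4 * kpp \<in> LR"
    unfolding W0_def al_def be_def using LR a_LR LR_2 by (simp add: LR_add LR_mult LR_power)
  have "dvd_in LR k (QA km lm * (Kp^2 * Lp^2))" using eq WLR by (simp add: dvd_in_self_mult)
  moreover have "coprime_in LR k (Kp^2 * Lp^2)"
    using coprime_in_mult[OF LR(3) LR_power[OF LR(1)] LR_power[OF LR(2)]] coprime_in_power[OF LR(3)] LR cop by simp
  ultimately show ?thesis
    using euclid_LR'[OF LR(3) LR_mult[OF LR_power[OF LR(1)] LR_power[OF LR(2)]] QA_LR[OF LR(5,6)]] by blast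
qed

lemma laurent_l:
  assumes LR: "Kp \<in> LR" "Lp \<in> LR" "k \<in> LR" "l \<in> LR" "km \<in> LR" "lm \<in> LR" "lpp \<in> LR"
    and rel: "km * Kp = QA k l" "lm * Lp = QB k l" "l * lpp = QB Kp Lp"
    and cop: "coprime_in LR l Kp" "coprime_in LR l Lp"
  shows "dvd_in LR l (QB km lm)"
proof -
  define ga where "ga = a5 * k + a6 * l"
  define de where "de = a2 * k + a3 * l"
  define W0 where "W0 = a1 * (2 * a3 * k^2 * ga + l * ga^2) * Lp^2 + a2 * (a3 * k^2 * de + a1 * k^2 * ga + l * ga * de) * Kp * Lp
              + a3 * (2 * a1 * k^2 * de + l * de^2) * Kp^2"
  have r1: "km * Kp = a3 * k^2 + l * ga" using rel(1) unfolding QA_def ga_def by (simp only: gY)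
  have r2: "lm * Lp = a1 * k^2 + l * de" using rel(2) unfolding QB_def de_def by (simp only: gY)
  have "QB km lm * (Kp^2 * Lp^2) = a1 * (km * Kp)^2 * Lp^2 + a2 * (km * Kp) * (lm * Lp) * Kp * Lp + a3 * (lm * Lp)^2 * Kp^2"
    unfolding QB_def by (rule idScale)
  also have "\<dots> = l * W0 + a1 * a3 * k^4 * (a1 * Kp^2 + a2 * Kp * Lp + a3 * Lp^2)"
    unfolding r1 r2 W0_def by (rule idL)
  also have "\<dots> = l * (W0 + a1 * a3 * k^4 * lpp)"
    by (simp only: rel(3)[unfolded QB_def, symmetric] gZ)
  finally have eq: "QB km lm * (Kp^2 * Lp^2) = l * (W0 + a1 * a3 * k^4 * lpp)" .
  have WLR: "W0 + a1 * a3 * k^4 * lpp \<in> LR"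
    unfolding W0_def ga_def de_def using LR a_LR LR_2 by (simp add: LR_add LR_mult LR_power)
  have "dvd_in LR l (QB km lm * (Kp^2 * Lp^2))" using eq WLR by (simp add: dvd_in_self_mult)
  moreover have "coprime_in LR l (Kp^2 * Lp^2)"
    using coprime_in_mult[OF LR(4) LR_power[OF LR(1)] LR_power[OF LR(2)]] coprime_in_power[OF LR(4)] LR cop by simp
  ultimately show ?thesis
    using euclid_LR'[OF LR(4) LR_mult[OF LR_power[OF LR(1)] LR_power[OF LR(2)]] QB_LR[OF LR(5,6)]] by blast
qed



definition kk :: "nat \<Rightarrow> lpoly" where "kk n = (SOME p. p \<in> LR \<and> emb p = kseq n)"
definition ll :: "nat \<Rightarrow> lpoly" where "ll n = (SOME p. p \<in> LR \<and> emb p = lseq n)"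

lemma kk_spec: "kseq n \<in> emb ` LR \<Longrightarrow> kk n \<in> LR \<and> emb (kk n) = kseq n"
proof -
  assume "kseq n \<in> emb ` LR"
  then obtain p where p: "p \<in> LR" "kseq n = emb p" by (rule imageE)
  have "\<exists>p. p \<in> LR \<and> emb p = kseq n" using p(1) p(2)[symmetric] by blast
  then show ?thesis unfolding kk_def by (rule someI_ex)
qed

lemma ll_spec: "lseq n \<in> emb ` LR \<Longrightarrow> ll n \<in> LR \<and> emb (ll n) = lseq n"
proof -
  assume "lseq n \<in> emb ` LR"
  then obtain p where p: "p \<in> LR" "lseq n = emb p" by (rule imageE)
  have "\<exists>p. p \<in> LR \<and> emb p = lseq n" using p(1) p(2)[symmetric] by blast
  then show ?thesis unfolding ll_def by (rule someI_ex)
qed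

lemma kk_eq: "p \<in> LR \<Longrightarrow> emb p = kseq n \<Longrightarrow> kk n = p"
proof -
  assume h: "p \<in> LR" "emb p = kseq n"
  have "kseq n \<in> emb ` LR" by (rule image_eqI[where f = "\<lambda>p. emb p", OF h(2)[symmetric] h(1)])
  then have "emb (kk n) = kseq n" using kk_spec by blast
  then have "emb (kk n) = emb p" using h(2) by (rule trans[OF _ sym])
  then show ?thesis by (simp only: emb_inj)
qed

lemma ll_eq: "p \<in> LR \<Longrightarrow> emb p = lseq n \<Longrightarrow> ll n = p"
proof -
  assume h: "p \<in> LR" "emb p = lseq n"
  have "lseq n \<in> emb ` LR" by (rule image_eqI[where f = "\<lambda>p. emb p", OF h(2)[symmetric] h(1)])
  then have "emb (ll n) = lseq n" using ll_spec by blast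
  then have "emb (ll n) = emb p" using h(2) by (rule trans[OF _ sym])
  then show ?thesis by (simp only: emb_inj)
qed

definition "P6 = ((1, 1, 1, 1, 0) :: pt)"
definition "P3 = ((1, 0, 0, 1, 1) :: pt)"
definition "P1 = ((0, 1, 1, 1, 1) :: pt)"

definition tprops :: "lpoly \<Rightarrow> bool" where
  "tprops x \<longleftrightarrow> x \<in> LR \<and> x \<noteq> 0 \<and> 0 < evL P6 x \<and> 0 < evL P3 x \<and> 0 < evL P1 x \<and> (\<exists>N. lcL x dvd Pz ^ N)"

lemma evL_sq: "k \<in> LR \<Longrightarrow> evL pt (k ^ 2) = evL pt k ^ 2"
  unfolding power2_eq_square by (rule evL_mult)

lemma evL_quad:
  assumes "k \<in> LR" "l \<in> LR"
  shows "evL pt (phiZ c1 * k ^ 2 + phiZ c2 * k * l + phiZ c3 * l ^ 2) =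
         evZ pt c1 * evL pt k ^ 2 + evZ pt c2 * evL pt k * evL pt l + evZ pt c3 * evL pt l ^ 2"
proof -
  have k2: "k ^ 2 \<in> LR" "l ^ 2 \<in> LR" using assms by (simp_all add: LR_power)
  have ck: "phiZ c2 * k \<in> LR" using assms by (simp add: LR_mult phiZ_LR)
  have t1: "phiZ c1 * k ^ 2 \<in> LR" "phiZ c2 * k * l \<in> LR" "phiZ c3 * l ^ 2 \<in> LR"
    using assms k2 ck by (simp_all add: LR_mult phiZ_LR)
  have e1: "evL pt (phiZ c1 * k ^ 2) = evZ pt c1 * evL pt k ^ 2"
    using evL_mult[OF phiZ_LR k2(1)] evL_sq[OF assms(1)] by (simp add: evL_phiZ)
  have e2: "evL pt (phiZ c2 * k * l) = evZ pt c2 * evL pt k * evL pt l"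
    using evL_mult[OF ck assms(2)] evL_mult[OF phiZ_LR assms(1)] by (simp add: evL_phiZ)
  have e3: "evL pt (phiZ c3 * l ^ 2) = evZ pt c3 * evL pt l ^ 2"
    using evL_mult[OF phiZ_LR k2(2)] evL_sq[OF assms(2)] by (simp add: evL_phiZ)
  show ?thesis
    using evL_add[OF LR_add[OF t1(1,2)] t1(3)] evL_add[OF t1(1,2)] e1 e2 e3 by simp
qed

lemma evL_QA: "k \<in> LR \<Longrightarrow> l \<in> LR \<Longrightarrow>
  evL pt (QA k l) = evZ pt A3z * evL pt k ^ 2 + evZ pt A5z * evL pt k * evL pt l + evZ pt A6z * evL pt l ^ 2"
  unfolding QA_def a_phiZ by (rule evL_quad)

lemma evL_QB: "k \<in> LR \<Longrightarrow> l \<in> LR \<Longrightarrow>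
  evL pt (QB k l) = evZ pt A1z * evL pt k ^ 2 + evZ pt A2z * evL pt k * evL pt l + evZ pt A3z * evL pt l ^ 2"
  unfolding QB_def a_phiZ by (rule evL_quad)

lemma pos3:
  fixes x y c1 c2 c3 :: int
  assumes "0 < x" "0 < y" "0 \<le> c1" "0 \<le> c2" "0 \<le> c3" "0 < c1 \<or> 0 < c2 \<or> 0 < c3"
  shows "0 < c1 * x ^ 2 + c2 * x * y + c3 * y ^ 2"
proof -
  have t1: "0 \<le> c1 * x ^ 2" and t2: "0 \<le> c2 * x * y" and t3: "0 \<le> c3 * y ^ 2" using assms by simp_all
  have "0 < c1 * x ^ 2 \<or> 0 < c2 * x * y \<or> 0 < c3 * y ^ 2" using assms by auto
  then show ?thesis using t1 t2 t3 by linarith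
qed

lemma tprops_nd:
  assumes "tprops x"
  shows "\<not> dvd_in LR a6 x" "\<not> dvd_in LR a3 x" "\<not> dvd_in LR a1 x"
proof -
  have x: "x \<in> LR" using assms by (simp add: tprops_def)
  show "\<not> dvd_in LR a6 x" using evL_dvd[OF x, of A6z P6] assms by (auto simp: tprops_def a_phiZ P6_def evZ_vars)
  show "\<not> dvd_in LR a3 x" using evL_dvd[OF x, of A3z P3] assms by (auto simp: tprops_def a_phiZ P3_def evZ_vars)
  show "\<not> dvd_in LR a1 x" using evL_dvd[OF x, of A1z P1] assms by (auto simp: tprops_def a_phiZ P1_def evZ_vars)
qed

lemma Pz_dvd: "A1z dvd Pz" "A3z dvd Pz" "A6z dvd Pz"
  by (simp_all add: Pz_def)

lemma step_newA:
  assumes k: "tprops k" and l: "tprops l" and kp: "tprops kp" and ne: "lmL k \<noteq> lmL l"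
    and q: "q \<in> LR" "q * kp = QA k l"
  shows "tprops q" "lmL q = (if lmL l < lmL k then lmL k + lmL k else lmL l + lmL l) - lmL kp"
proof -
  have kk: "k \<in> LR" "k \<noteq> 0" and ll: "l \<in> LR" "l \<noteq> 0" and kpp: "kp \<in> LR" "kp \<noteq> 0"
    using k l kp by (simp_all add: tprops_def)
  obtain N1 N2 where lc: "lcL k dvd Pz ^ N1" "lcL l dvd Pz ^ N2" using k l by (auto simp: tprops_def)
  have q2: "q * kp = phiZ A3z * k ^ 2 + phiZ A5z * k * l + phiZ A6z * l ^ 2" using q(2) by (simp add: QA_def a_phiZ)
  note nt = new_term[OF kk ll kpp q(1) q2 Az_nz(3) Az_nz(4) Az_nz(5) Pz_dvd(2) Pz_dvd(3) lc ne]
  have ev: "0 < evL pt q" if "0 < evL pt k" "0 < evL pt l" "0 < evL pt kp"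
    "0 < evZ pt A3z * evL pt k ^ 2 + evZ pt A5z * evL pt k * evL pt l + evZ pt A6z * evL pt l ^ 2" for pt
  proof -
    have "evL pt q * evL pt kp = evL pt (QA k l)" using evL_mult[OF q(1) kpp(1)] q(2) by simp
    then have "0 < evL pt q * evL pt kp" using that(4) evL_QA[OF kk(1) ll(1)] by simp
    then show ?thesis using that(3) by (simp add: zero_less_mult_iff)
  qed
  have "0 < evZ P6 A3z * evL P6 k ^ 2 + evZ P6 A5z * evL P6 k * evL P6 l + evZ P6 A6z * evL P6 l ^ 2"
    by (rule pos3) (use k l in \<open>simp_all add: tprops_def P6_def evZ_vars\<close>)
  then have e6: "0 < evL P6 q" using ev[of P6] k l kp by (simp add: tprops_def)
  have "0 < evZ P3 A3z * evL P3 k ^ 2 + evZ P3 A5z * evL P3 k * evL P3 l + evZ P3 A6z * evL P3 l ^ 2"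
    by (rule pos3) (use k l in \<open>simp_all add: tprops_def P3_def evZ_vars\<close>)
  then have e3: "0 < evL P3 q" using ev[of P3] k l kp by (simp add: tprops_def)
  have "0 < evZ P1 A3z * evL P1 k ^ 2 + evZ P1 A5z * evL P1 k * evL P1 l + evZ P1 A6z * evL P1 l ^ 2"
    by (rule pos3) (use k l in \<open>simp_all add: tprops_def P1_def evZ_vars\<close>)
  then have e1: "0 < evL P1 q" using ev[of P1] k l kp by (simp add: tprops_def)
  show "tprops q" using nt(1,2) e6 e3 e1 q(1) by (simp add: tprops_def)
  show "lmL q = (if lmL l < lmL k then lmL k + lmL k else lmL l + lmL l) - lmL kp" using nt(3) .
qed

lemma step_newB:
  assumes k: "tprops k" and l: "tprops l" and kp: "tprops kp" and ne: "lmL k \<noteq> lmL l"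
    and q: "q \<in> LR" "q * kp = QB k l"
  shows "tprops q" "lmL q = (if lmL l < lmL k then lmL k + lmL k else lmL l + lmL l) - lmL kp"
proof -
  have kk: "k \<in> LR" "k \<noteq> 0" and ll: "l \<in> LR" "l \<noteq> 0" and kpp: "kp \<in> LR" "kp \<noteq> 0"
    using k l kp by (simp_all add: tprops_def)
  obtain N1 N2 where lc: "lcL k dvd Pz ^ N1" "lcL l dvd Pz ^ N2" using k l by (auto simp: tprops_def)
  have q2: "q * kp = phiZ A1z * k ^ 2 + phiZ A2z * k * l + phiZ A3z * l ^ 2" using q(2) by (simp add: QB_def a_phiZ)
  note nt = new_term[OF kk ll kpp q(1) q2 Az_nz(1) Az_nz(2) Az_nz(3) Pz_dvd(1) Pz_dvd(2) lc ne]
  have ev: "0 < evL pt q" if "0 < evL pt k" "0 < evL pt l" "0 < evL pt kp"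
    "0 < evZ pt A1z * evL pt k ^ 2 + evZ pt A2z * evL pt k * evL pt l + evZ pt A3z * evL pt l ^ 2" for pt
  proof -
    have "evL pt q * evL pt kp = evL pt (QB k l)" using evL_mult[OF q(1) kpp(1)] q(2) by simp
    then have "0 < evL pt q * evL pt kp" using that(4) evL_QB[OF kk(1) ll(1)] by simp
    then show ?thesis using that(3) by (simp add: zero_less_mult_iff)
  qed
  have "0 < evZ P6 A1z * evL P6 k ^ 2 + evZ P6 A2z * evL P6 k * evL P6 l + evZ P6 A3z * evL P6 l ^ 2"
    by (rule pos3) (use k l in \<open>simp_all add: tprops_def P6_def evZ_vars\<close>)
  then have e6: "0 < evL P6 q" using ev[of P6] k l kp by (simp add: tprops_def)
  have "0 < evZ P3 A1z * evL P3 k ^ 2 + evZ P3 A2z * evL P3 k * evL P3 l + evZ P3 A3z * evL P3 l ^ 2"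
    by (rule pos3) (use k l in \<open>simp_all add: tprops_def P3_def evZ_vars\<close>)
  then have e3: "0 < evL P3 q" using ev[of P3] k l kp by (simp add: tprops_def)
  have "0 < evZ P1 A1z * evL P1 k ^ 2 + evZ P1 A2z * evL P1 k * evL P1 l + evZ P1 A3z * evL P1 l ^ 2"
    by (rule pos3) (use k l in \<open>simp_all add: tprops_def P1_def evZ_vars\<close>)
  then have e1: "0 < evL P1 q" using ev[of P1] k l kp by (simp add: tprops_def)
  show "tprops q" using nt(1,2) e6 e3 e1 q(1) by (simp add: tprops_def)
  show "lmL q = (if lmL l < lmL k then lmL k + lmL k else lmL l + lmL l) - lmL kp" using nt(3) .
qed



definition good :: "nat \<Rightarrow> bool" where
  "good j \<longleftrightarrow> kseq j \<in> emb ` LR \<and> lseq j \<in> emb ` LR \<and> tprops (kk j) \<and> tprops (ll j) \<and> lmL (kk j) \<noteq> lmL (ll j)"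

definition quad :: "nat \<Rightarrow> bool" where
  "quad j \<longleftrightarrow> coprime_in LR (kk j) (ll j) \<and> coprime_in LR (kk j) (kk (Suc j)) \<and> coprime_in LR (kk j) (ll (Suc j))
     \<and> coprime_in LR (ll j) (kk (Suc j)) \<and> coprime_in LR (ll j) (ll (Suc j)) \<and> coprime_in LR (kk (Suc j)) (ll (Suc j))"

definition Inv :: "nat \<Rightarrow> bool" where
  "Inv n \<longleftrightarrow> (\<forall>j \<le> Suc n. good j) \<and> (\<forall>j \<le> n. quad j)"

lemma good_D:
  assumes "good j"
  shows "kk j \<in> LR" "ll j \<in> LR" "kseq j = emb (kk j)" "lseq j = emb (ll j)" "tprops (kk j)" "tprops (ll j)"
    "kk j \<noteq> 0" "ll j \<noteq> 0" "lmL (kk j) \<noteq> lmL (ll j)"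
  using assms kk_spec[of j] ll_spec[of j] by (auto simp: good_def tprops_def)

lemma frac_eq: "(x::'a::field) = y / z \<Longrightarrow> z \<noteq> 0 \<Longrightarrow> x * z = y"
  by simp

lemma rel_lemma:
  assumes "good j" "good (Suc j)" "good (Suc (Suc j))"
  shows "kk (Suc (Suc j)) * kk j = QA (kk (Suc j)) (ll (Suc j))"
        "ll (Suc (Suc j)) * ll j = QB (kk (Suc j)) (ll (Suc j))"
proof -
  note g0 = good_D[OF assms(1)] and g1 = good_D[OF assms(2)] and g2 = good_D[OF assms(3)]
  have "kseq (Suc (Suc j)) = emb (QA (kk (Suc j)) (ll (Suc j))) / kseq j"
    by (rule kseq_rec[OF g1(3) g1(4)])
  then have "emb (kk (Suc (Suc j))) * emb (kk j) = emb (QA (kk (Suc j)) (ll (Suc j)))"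
    using g0(3) g2(3) emb_nz[OF g0(7)] by (intro frac_eq) simp_all
  then show "kk (Suc (Suc j)) * kk j = QA (kk (Suc j)) (ll (Suc j))" by (simp only: emb_mult[symmetric] emb_inj)
  have "lseq (Suc (Suc j)) = emb (QB (kk (Suc j)) (ll (Suc j))) / lseq j"
    by (rule lseq_rec[OF g1(3) g1(4)])
  then have "emb (ll (Suc (Suc j))) * emb (ll j) = emb (QB (kk (Suc j)) (ll (Suc j)))"
    using g0(4) g2(4) emb_nz[OF g0(8)] by (intro frac_eq) simp_all
  then show "ll (Suc (Suc j)) * ll j = QB (kk (Suc j)) (ll (Suc j))" by (simp only: emb_mult[symmetric] emb_inj)
qed

lemma KP_dvd: "K0P dvd KP ^ 1" "K1P dvd KP ^ 1" "L0P dvd KP ^ 1" "L1P dvd KP ^ 1"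
  by (simp_all add: KP_def)

lemma var_phiP: "k0 = phiP K0P" "k1 = phiP K1P" "l0 = phiP L0P" "l1 = phiP L1P"
  by (simp_all add: phiP_vars k0_def k1_def l0_def l1_def)

lemma evP_vars1: "evP pt K0P = 1" "evP pt K1P = 1" "evP pt L0P = 1" "evP pt L1P = 1"
  using ghomD(1,2)[OF ghom_evZ, of pt]
  by (simp_all add: evP_def K0P_def K1P_def L0P_def L1P_def ev1_const ev1_pCons ev1_one ghom_ev1 ghom_evZ)

lemma lc4_vars: "lc4 K0P = 1" "lc4 K1P = 1" "lc4 L0P = 1" "lc4 L1P = 1"
  by (simp_all add: lc4_def K0P_def K1P_def L0P_def L1P_def)

lemma lm4_vars: "lm4 K0P = (0, 0, 0, 1)" "lm4 K1P = (0, 0, 1, 0)" "lm4 L0P = (0, 1, 0, 0)" "lm4 L1P = (1, 0, 0, 0)"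
  by (simp_all add: lm4_def lmi4_def lmi3_def K0P_def K1P_def L0P_def L1P_def)

lemma base_var:
  assumes "X \<noteq> 0" "\<And>pt. evP pt X = 1" "lc4 X = 1"
  shows "tprops (phiP X)" "unit_in LR (phiP X) \<Longrightarrow> True" "lmL (phiP X) = ti (lm4 X)"
proof -
  have r: "phiP X * KK ^ 0 = phiP X" by simp
  have nz: "phiP X \<noteq> 0" using assms(1) phiP_eq0 by blast
  have "evL pt (phiP X) = 1" for pt using evL_rep[OF phiP_LR r] assms(2) by simp
  moreover have "lcL (phiP X) = 1" using lmL_rep(2)[OF phiP_LR nz r] assms(3) by simp
  ultimately show "tprops (phiP X)" using nz phiP_LR by (auto simp: tprops_def intro: exI[of _ 0])
  show "unit_in LR (phiP X) \<Longrightarrow> True" by simp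
  show "lmL (phiP X) = ti (lm4 X)" using lmL_rep(1)[OF phiP_LR nz r] by (simp add: nt_def zero_prod_def)
qed

lemma vars_nz: "K0P \<noteq> 0" "K1P \<noteq> 0" "L0P \<noteq> 0" "L1P \<noteq> 0"
  by (simp_all add: K0P_def K1P_def L0P_def L1P_def)

lemma base_kk: "kk 0 = k0" "kk 1 = k1" "ll 0 = l0" "ll 1 = l1"
  using kk_eq[of k0 0] kk_eq[of k1 1] ll_eq[of l0 0] ll_eq[of l1 1] kseq_0 kseq_1 lseq_0 lseq_1
  by (simp_all add: var_phiP phiP_LR)

lemma base_kk': "kk (Suc 0) = k1" "ll (Suc 0) = l1"
  using base_kk by simp_all

lemma base_units: "unit_in LR (kk 0)" "unit_in LR (kk 1)" "unit_in LR (ll 0)" "unit_in LR (ll 1)"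
proof -
  have "\<exists>M. X dvd KP ^ M" if "X dvd KP ^ 1" for X using that by blast
  then show "unit_in LR (kk 0)" "unit_in LR (kk 1)" "unit_in LR (ll 0)" "unit_in LR (ll 1)"
    using KP_dvd unit_transfer unfolding base_kk var_phiP by blast+
qed

lemma Inv_0: "Inv 0"
proof -
  note b = base_var[OF vars_nz(1) evP_vars1(1) lc4_vars(1)] base_var[OF vars_nz(2) evP_vars1(2) lc4_vars(2)]
    base_var[OF vars_nz(3) evP_vars1(3) lc4_vars(3)] base_var[OF vars_nz(4) evP_vars1(4) lc4_vars(4)]
  have im: "kseq 0 \<in> emb ` LR" "kseq 1 \<in> emb ` LR" "lseq 0 \<in> emb ` LR" "lseq 1 \<in> emb ` LR"
    using kseq_0 kseq_1 lseq_0 lseq_1 by (auto simp: var_phiP intro!: image_eqI[where f = "\<lambda>p. emb p"] phiP_LR)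
  have "good 0" using im b by (simp add: good_def base_kk var_phiP lm4_vars ti_def)
  moreover have "good 1"
  proof -
    have e1: "kk 1 = phiP K1P" "ll 1 = phiP L1P" using base_kk var_phiP by simp_all
    have "tprops (kk 1)" "tprops (ll 1)" "lmL (kk 1) \<noteq> lmL (ll 1)" unfolding e1 using b by (simp_all add: lm4_vars ti_def)
    then show "good 1" unfolding good_def using im by blast
  qed
  moreover have "quad 0" using base_units by (simp add: quad_def coprime_in_unit)
  ultimately show ?thesis unfolding Inv_def by (auto simp: le_Suc_eq)
qed

lemma Inv_Suc:
  assumes inv: "Inv n"
  shows "Inv (Suc n)"
proof -
  have gj: "good j" if "j \<le> Suc n" for j using inv that by (simp add: Inv_def)
  have qj: "quad j" if "j \<le> n" for j using inv that by (simp add: Inv_def)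
  have gn0: "good n" and gm0: "good (Suc n)" using gj by simp_all
  note gn = good_D[OF gn0] and gm = good_D[OF gm0]
  have dv: "dvd_in LR (kk n) (QA (kk (Suc n)) (ll (Suc n))) \<and> dvd_in LR (ll n) (QB (kk (Suc n)) (ll (Suc n)))"
  proof (cases "n \<le> 1")
    case True
    then have "n = 0 \<or> n = 1" by auto
    then have "unit_in LR (kk n) \<and> unit_in LR (ll n)" using base_units by auto
    then show ?thesis using unit_in_dvd QA_LR[OF gm(1,2)] QB_LR[OF gm(1,2)] by blast
  next
    case False
    define p where "p = n - 2"
    have n: "n = Suc (Suc p)" using False by (simp add: p_def)
    have g: "good p" "good (Suc p)" "good (Suc (Suc p))" "good (Suc (Suc (Suc p)))" using gj n by auto
    note r1 = rel_lemma[OF g(2) g(3) g(4)] and r0 = rel_lemma[OF g(1) g(2) g(3)]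
    have qp: "quad (Suc p)" using qj n by auto
    note g0 = good_D[OF g(1)] and g1 = good_D[OF g(2)] and g2 = good_D[OF g(3)] and g3 = good_D[OF g(4)]
    have c1: "coprime_in LR (kk (Suc (Suc p))) (kk (Suc p))" "coprime_in LR (kk (Suc (Suc p))) (ll (Suc p))"
      "coprime_in LR (ll (Suc (Suc p))) (kk (Suc p))" "coprime_in LR (ll (Suc (Suc p))) (ll (Suc p))"
      using qp by (auto simp: quad_def intro: coprime_in_sym)
    have "dvd_in LR (kk (Suc (Suc p))) (QA (kk (Suc (Suc (Suc p)))) (ll (Suc (Suc (Suc p)))))"
      by (rule laurent_k[OF g1(1) g1(2) g2(1) g2(2) g3(1) g3(2) g0(1) r1(1) r1(2) r0(1) c1(1) c1(2)])
    moreover have "dvd_in LR (ll (Suc (Suc p))) (QB (kk (Suc (Suc (Suc p)))) (ll (Suc (Suc (Suc p)))))"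
      by (rule laurent_l[OF g1(1) g1(2) g2(1) g2(2) g3(1) g3(2) g0(2) r1(1) r1(2) r0(2) c1(3) c1(4)])
    ultimately show ?thesis using n by simp
  qed
  obtain q where q: "q \<in> LR" "QA (kk (Suc n)) (ll (Suc n)) = kk n * q" using dv by (auto simp: dvd_in_def)
  obtain q' where q': "q' \<in> LR" "QB (kk (Suc n)) (ll (Suc n)) = ll n * q'" using dv by (auto simp: dvd_in_def)
  have ks: "kseq (Suc (Suc n)) = emb q"
    using kseq_rec[OF gm(3) gm(4)] gn(3) emb_div[OF gn(7) q(2)] by simp
  have ls: "lseq (Suc (Suc n)) = emb q'"
    using lseq_rec[OF gm(3) gm(4)] gn(4) emb_div[OF gn(8) q'(2)] by simp
  have kq: "kk (Suc (Suc n)) = q" by (rule kk_eq[OF q(1) ks[symmetric]])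
  have lq: "ll (Suc (Suc n)) = q'" by (rule ll_eq[OF q'(1) ls[symmetric]])
  have qr: "q * kk n = QA (kk (Suc n)) (ll (Suc n))" using q(2) by (simp add: mult.commute)
  have qr': "q' * ll n = QB (kk (Suc n)) (ll (Suc n))" using q'(2) by (simp add: mult.commute)
  note sA = step_newA[OF gm(5) gm(6) gn(5) gm(9) q(1) qr]
  note sB = step_newB[OF gm(5) gm(6) gn(6) gm(9) q'(1) qr']
  have ne: "lmL q \<noteq> lmL q'" using sA(2) sB(2) gn(9) by simp
  have im: "kseq (Suc (Suc n)) \<in> emb ` LR" "lseq (Suc (Suc n)) \<in> emb ` LR"
    using ks ls q(1) q'(1) by (auto intro!: image_eqI[where f = "\<lambda>p. emb p"])
  have goodm: "good (Suc (Suc n))" unfolding good_def kq lq using im sA(1) sB(1) ne by blast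
  have qn: "quad n" using qj by simp
  obtain N where lcq: "lcL q dvd Pz ^ N" using sA(1) by (auto simp: tprops_def)
  have qnz: "q \<noteq> 0" using sA(1) by (simp add: tprops_def)
  have cm: "coprime_in LR (kk (Suc n)) (ll (Suc n))" using qn by (simp add: quad_def)
  note cs = coprime_step[OF gn(1) gn(2) gm(1) gm(2) q(1) q'(1) qr qr' cm
      tprops_nd(1)[OF gm(5)] tprops_nd(2)[OF gm(5)] tprops_nd(2)[OF gm(6)] tprops_nd(3)[OF gm(6)]
      gm(7) gm(8) qnz lcq]
  have quadm: "quad (Suc n)" unfolding quad_def kq lq using cm cs by blast
  show ?thesis unfolding Inv_def
  proof (intro conjI allI impI)
    fix j assume "j \<le> Suc (Suc n)"
    then have "j \<le> Suc n \<or> j = Suc (Suc n)" by auto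
    then show "good j" using gj goodm by auto
  next
    fix j assume "j \<le> Suc n"
    then have "j \<le> n \<or> j = Suc n" by auto
    then show "quad j" using qj quadm by auto
  qed
qed

lemma Inv_all: "Inv n"
  by (induction n) (simp_all add: Inv_0 Inv_Suc)

theorem proposition1:
  shows "(\<forall>n. kseq n \<in> emb ` LR \<and> lseq n \<in> emb ` LR) \<and>
    (\<forall>n p q r s. p \<in> LR \<and> q \<in> LR \<and> r \<in> LR \<and> s \<in> LR \<and>
        emb p = kseq n \<and> emb q = lseq n \<and> emb r = kseq (Suc n) \<and> emb s = lseq (Suc n) \<longrightarrow>
        coprime_in LR p q \<and> coprime_in LR p r \<and> coprime_in LR p s \<and>
        coprime_in LR q r \<and> coprime_in LR q s \<and> coprime_in LR r s)"
proof -
  have part1: "kseq n \<in> emb ` LR \<and> lseq n \<in> emb ` LR" for n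
  proof -
    have "good n" using Inv_all[of n] by (simp add: Inv_def)
    then show ?thesis by (simp add: good_def)
  qed
  have part2: "coprime_in LR p q \<and> coprime_in LR p r \<and> coprime_in LR p s \<and>
        coprime_in LR q r \<and> coprime_in LR q s \<and> coprime_in LR r s"
    if h: "p \<in> LR \<and> q \<in> LR \<and> r \<in> LR \<and> s \<in> LR \<and>
        emb p = kseq n \<and> emb q = lseq n \<and> emb r = kseq (Suc n) \<and> emb s = lseq (Suc n)" for n p q r s
  proof -
    have "kk n = p" "ll n = q" "kk (Suc n) = r" "ll (Suc n) = s"
      using kk_eq[of p n] ll_eq[of q n] kk_eq[of r "Suc n"] ll_eq[of s "Suc n"] h by simp_all
    moreover have "quad n" using Inv_all[of n] by (simp add: Inv_def)
    ultimately show ?thesis by (simp add: quad_def)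
  qed
  show ?thesis using part1 part2 by blast
qed

end
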